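(* Let $d\in\{2,3\}$ and let $(W_n)$ be the simple symmetric random walk on $\mathbb{Z}^d$ started at $0$ (each of the $2d$ neighbours chosen with probability $1/(2d)$), and $X_n=n^{-1/4}W_n$. For $t\in\mathbb{R}^d$ set $\psi_n(t)=\mathbb{E}[e^{\langle t,X_n\rangle}]\exp\!\big(-\tfrac{n^{1/2}\|t\|^2}{2d}\big)$. Then $\psi_n\to\psi$ locally uniformly on $\mathbb{R}^d$ and in $L^1(\mathbb{R}^d)$, and $\psi\in L^1(\mathbb{R}^d)$, where $$\psi(t_1,t_2)=\exp\!\Big(-\frac{t_1^4+t_2^4+6t_1^2t_2^2}{96}\Big)\ (d=2),\qquad \psi(t_1,t_2,t_3)=\exp\!\Big(-\frac{t_1^2t_2^2+t_1^2t_3^2+t_2^2t_3^2}{36}\Big)\ (d=3).$$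
   Context: $\langle u,v\rangle=\sum_i u_iv_i$ and $\|\cdot\|$ is the Euclidean norm on $\mathbb{R}^d$. *)

theory Defs
  imports "HOL-Probability.Probability"
begin

definition srw_step :: "(real ^ 'n::finite) pmf" where
  "srw_step = pmf_of_set ({axis i 1 | i. True} \<union> {axis i (-1) | i. True})"

fun srw :: "nat \<Rightarrow> (real ^ 'n::finite) pmf" where
  "srw 0 = return_pmf 0"
| "srw (Suc n) = bind_pmf (srw n) (\<lambda>w. map_pmf (\<lambda>s. w + s) srw_step)"

definition psi_n :: "nat \<Rightarrow> real ^ 'n::finite \<Rightarrow> real" where
  "psi_n n t = measure_pmf.expectation (srw n)
       (\<lambda>w. exp (t \<bullet> (real n powr (-1/4) *\<^sub>R w)))
     * exp (- sqrt (real n) * (norm t)\<^sup>2 / (2 * real CARD('n)))"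

definition psi2 :: "real ^ 2 \<Rightarrow> real" where
  "psi2 t = exp (- ((t$1)^4 + (t$2)^4 + 6 * (t$1)\<^sup>2 * (t$2)\<^sup>2) / 96)"

definition psi3 :: "real ^ 3 \<Rightarrow> real" where
  "psi3 t = exp (- ((t$1)\<^sup>2 * (t$2)\<^sup>2 + (t$1)\<^sup>2 * (t$3)\<^sup>2 + (t$2)\<^sup>2 * (t$3)\<^sup>2) / 36)"

definition srw_conv :: "(real ^ 'n::finite \<Rightarrow> real) \<Rightarrow> bool" where
  "srw_conv psi \<longleftrightarrow>
     (\<forall>K :: (real ^ 'n) set. compact K \<longrightarrow> uniform_limit K (\<lambda>n. psi_n n :: real ^ 'n \<Rightarrow> real) psi sequentially)
   \<and> integrable lborel psi
   \<and> (\<forall>\<^sub>F n in sequentially. integrable lborel (psi_n n :: real ^ 'n \<Rightarrow> real))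
   \<and> ((\<lambda>n. LINT (t :: real ^ 'n)|lborel. \<bar>psi_n n t - psi t\<bar>) \<longlongrightarrow> 0) sequentially"

end

theory Submission
  imports Defs
begin


definition Mf :: "real ^ 'n::finite \<Rightarrow> real" where
  "Mf u = (\<Sum>i\<in>UNIV. cosh (u $ i)) / real CARD('n)"

lemma srw_step_set: "({axis i 1 | i. True} \<union> {axis i (-1) | i. True} :: (real^'n::finite) set)
   = range (\<lambda>i. axis i 1) \<union> range (\<lambda>i. axis i (-1))"
  by auto

lemma step_exp:
  fixes u :: "real ^ 'n::finite"
  shows "measure_pmf.expectation srw_step (\<lambda>s. exp (u \<bullet> s)) = Mf u"
proof -
  let ?A = "range (\<lambda>i. axis i 1) :: (real^'n) set"
  let ?B = "range (\<lambda>i. axis i (-1)) :: (real^'n) set"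
  have disj: "?A \<inter> ?B = {}" by (auto simp: axis_eq_axis)
  have injA: "inj (\<lambda>i. axis i (1::real) :: real^'n)" by (auto intro: injI simp: axis_eq_axis)
  have injB: "inj (\<lambda>i. axis i (-1::real) :: real^'n)" by (auto intro: injI simp: axis_eq_axis)
  have cA: "card ?A = CARD('n)" using injA by (simp add: card_image)
  have cB: "card ?B = CARD('n)" using injB by (simp add: card_image)
  have card: "card (?A \<union> ?B) = 2 * CARD('n)" using disj cA cB by (simp add: card_Un_disjoint)
  have ne: "?A \<union> ?B \<noteq> {}" by auto
  have "measure_pmf.expectation srw_step (\<lambda>s. exp (u \<bullet> s))
      = (\<Sum>s\<in>?A \<union> ?B. exp (u \<bullet> s)) / card (?A \<union> ?B)"
    unfolding srw_step_def srw_step_set using ne by (subst integral_pmf_of_set) auto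
  also have "(\<Sum>s\<in>?A \<union> ?B. exp (u \<bullet> s)) = (\<Sum>s\<in>?A. exp (u \<bullet> s)) + (\<Sum>s\<in>?B. exp (u \<bullet> s))"
    using disj by (simp add: sum.union_disjoint)
  also have "(\<Sum>s\<in>?A. exp (u \<bullet> s)) = (\<Sum>i\<in>UNIV. exp (u $ i))"
    using injA by (simp add: sum.reindex inner_axis)
  also have "(\<Sum>s\<in>?B. exp (u \<bullet> s)) = (\<Sum>i\<in>UNIV. exp (- u $ i))"
    using injB by (simp add: sum.reindex inner_axis)
  also have "(\<Sum>i\<in>UNIV. exp (u $ i)) + (\<Sum>i\<in>UNIV. exp (- u $ i)) = 2 * (\<Sum>i\<in>UNIV. cosh (u $ i))"
    by (simp add: sum.distrib[symmetric] sum_distrib_left cosh_field_def, intro sum.cong, auto)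
  finally show ?thesis using card by (simp add: Mf_def)
qed

lemma finite_srw: "finite (set_pmf (srw n))"
proof (induction n)
  case 0 then show ?case by simp
next
  case (Suc n)
  have "finite (set_pmf (srw_step :: (real^'a) pmf))"
    unfolding srw_step_def srw_step_set by (subst set_pmf_of_set) auto
  then show ?case using Suc by simp
qed

lemma mgf_srw:
  fixes u :: "real ^ 'n::finite"
  shows "measure_pmf.expectation (srw n) (\<lambda>w. exp (u \<bullet> w)) = Mf u ^ n"
proof (induction n)
  case 0 then show ?case by simp
next
  case (Suc n)
  have fs: "finite (set_pmf (srw_step :: (real^'n) pmf))"
    unfolding srw_step_def srw_step_set by (subst set_pmf_of_set) auto
  have "measure_pmf.expectation (srw (Suc n)) (\<lambda>w. exp (u \<bullet> w)) =
     (\<Sum>a\<in>set_pmf (srw n). pmf (srw n) a *\<^sub>R measure_pmf.expectation (map_pmf (\<lambda>s. a + s) srw_step) (\<lambda>w. exp (u \<bullet> w)))"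
    using finite_srw fs by (simp only: srw.simps, subst pmf_expectation_bind[of "set_pmf (srw n)"]) auto
  also have "\<dots> = (\<Sum>a\<in>set_pmf (srw n). pmf (srw n) a *\<^sub>R (exp (u \<bullet> a) * Mf u))"
    by (simp add: inner_add_right exp_add step_exp[symmetric])
  also have "\<dots> = (\<Sum>a\<in>set_pmf (srw n). pmf (srw n) a *\<^sub>R exp (u \<bullet> a)) * Mf u"
    by (simp add: sum_distrib_right mult.assoc)
  also have "(\<Sum>a\<in>set_pmf (srw n). pmf (srw n) a *\<^sub>R exp (u \<bullet> a)) = measure_pmf.expectation (srw n) (\<lambda>w. exp (u \<bullet> w))"
    using finite_srw by (subst integral_measure_pmf[of "set_pmf (srw n)"]) auto
  finally show ?case using Suc by simp
qed



lemma cosh_sums: "(\<lambda>k. x^(2*k) / fact (2*k)) sums cosh (x::real)"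
proof -
  have "(\<lambda>k. (\<lambda>n. if even n then x ^ n /\<^sub>R fact n else 0) (2*k)) sums cosh x
     \<longleftrightarrow> (\<lambda>n. if even n then x ^ n /\<^sub>R fact n else 0) sums cosh x"
    by (rule sums_mono_reindex) (auto simp: strict_mono_def elim!: evenE)
  then show ?thesis using cosh_converges[of x] by (simp add: divide_inverse mult.commute)
qed

lemma fact6: "720 * fact k \<le> (fact (k+6) :: nat)"
proof (induction k)
  case 0 then show ?case by (simp add: fact_numeral)
next
  case (Suc k)
  have "720 * fact (Suc k) = (Suc k) * (720 * fact k)" by simp
  also have "\<dots> \<le> (Suc k) * fact (k+6)" by (rule mult_le_mono2[OF Suc.IH])
  also have "\<dots> \<le> (k + 7) * fact (k+6)" by (intro mult_le_mono1) simp
  also have "\<dots> = fact (Suc k + 6)" by (subst add_Suc, subst fact_Suc, simp)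
  finally show ?case .
qed

lemma fact_ratio6: "6^k * fact k \<le> 3 * (fact (2*k) :: nat)"
proof (induction k)
  case 0 then show ?case by simp
next
  case (Suc k)
  show ?case
  proof (cases "k = 0")
    case True then show ?thesis by (simp add: fact_numeral)
  next
    case False
    have "6^(Suc k) * fact (Suc k) = (6 * Suc k) * (6^k * fact k)" by (simp add: algebra_simps)
    also have "\<dots> \<le> (6 * Suc k) * (3 * fact (2*k))" using Suc by (intro mult_le_mono2)
    also have "\<dots> \<le> ((2*k+1) * (2*k+2)) * (3 * fact (2*k))"
      using False by (intro mult_le_mono1) (simp add: algebra_simps)
    also have "\<dots> = 3 * fact (2 * Suc k)"
      by (simp add: fact_Suc algebra_simps)
    finally show ?thesis .
  qed
qed

lemma fact_ratio4: "4^k * fact k \<le> 2 * (fact (2*k) :: nat)"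
proof (induction k)
  case 0 then show ?case by simp
next
  case (Suc k)
  show ?case
  proof (cases "k = 0")
    case True then show ?thesis by (simp add: fact_numeral)
  next
    case False
    have "4^(Suc k) * fact (Suc k) = (4 * Suc k) * (4^k * fact k)" by (simp add: algebra_simps)
    also have "\<dots> \<le> (4 * Suc k) * (2 * fact (2*k))" using Suc by (intro mult_le_mono2)
    also have "\<dots> \<le> ((2*k+1) * (2*k+2)) * (2 * fact (2*k))"
      using False by (intro mult_le_mono1) (simp add: algebra_simps)
    also have "\<dots> = 2 * fact (2 * Suc k)"
      by (simp add: fact_Suc algebra_simps)
    finally show ?thesis .
  qed
qed

lemma cosh_rem:
  fixes x :: real assumes "\<bar>x\<bar> \<le> 1"
  shows "0 \<le> cosh x - 1 - x^2/2 - x^4/24" and "cosh x - 1 - x^2/2 - x^4/24 \<le> x^6/240"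
proof -
  let ?a = "\<lambda>k. x^(2*k) / fact (2*k)"
  have s: "(\<lambda>k. ?a (k+3)) sums (cosh x - (\<Sum>k<3. ?a k))"
    using cosh_sums[of x] by (subst sums_iff_shift) simp
  have e3: "(\<Sum>k<3. ?a k) = 1 + x^2/2 + x^4/24"
    by (simp add: eval_nat_numeral fact_numeral)
  have nn: "0 \<le> ?a (k+3)" for k
  proof -
    have "0 \<le> x^(2*(k+3))" by (simp add: zero_le_even_power)
    then show ?thesis by simp
  qed
  show "0 \<le> cosh x - 1 - x^2/2 - x^4/24"
    using sums_le[OF _ sums_zero s] nn e3 by (simp add: algebra_simps)
  have ex: "(\<lambda>k. x^6/720 * ((x^2)^k /\<^sub>R fact k)) sums (x^6/720 * exp (x^2))"
    by (rule sums_mult) (rule exp_converges)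
  have le: "?a (k+3) \<le> x^6/720 * ((x^2)^k /\<^sub>R fact k)" for k
  proof -
    have f1: "720 * fact k \<le> (fact (2*k+6) :: real)"
    proof -
      have "720 * fact k \<le> (fact (k+6)::nat)" by (rule fact6)
      also have "fact (k+6) \<le> (fact (2*k+6) :: nat)" by (rule fact_mono) simp
      finally have "real (720 * fact k) \<le> real (fact (2*k+6))" by (simp only: of_nat_le_iff)
      then show ?thesis by simp
    qed
    have p: "x^(2*(k+3)) = x^6 * (x^2)^k"
    proof -
      have "x^(2*(k+3)) = x^(6 + 2*k)" by (simp add: algebra_simps)
      also have "\<dots> = x^6 * (x^2)^k" by (simp only: power_add power_mult)
      finally show ?thesis .
    qed
    have "?a (k+3) = x^6 * (x^2)^k / fact (2*k+6)"
      by (simp only: p) (simp add: algebra_simps)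
    also have "\<dots> \<le> x^6 * (x^2)^k / (720 * fact k)"
      by (intro divide_left_mono f1) (auto simp: zero_le_mult_iff)
    also have "\<dots> = x^6/720 * ((x^2)^k /\<^sub>R fact k)" by (simp add: field_simps)
    finally show ?thesis .
  qed
  have "cosh x - (\<Sum>k<3. ?a k) \<le> x^6/720 * exp (x^2)"
    using sums_le[OF le s ex] .
  moreover have "exp (x^2) \<le> 3"
  proof -
    have "x^2 \<le> 1" using assms by (simp add: abs_square_le_1)
    then have "exp (x^2) \<le> exp 1" by simp
    also have "exp (1::real) \<le> 3" using exp_le by simp
    finally show ?thesis .
  qed
  moreover have "x^6/720 * exp (x^2) \<le> x^6/720 * 3"
    using \<open>exp (x^2) \<le> 3\<close> by (rule mult_left_mono) simp
  ultimately have "cosh x - (\<Sum>k<3. ?a k) \<le> x^6/720 * 3"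
    by linarith
  then show "cosh x - 1 - x^2/2 - x^4/24 \<le> x^6/240" using e3 by simp
qed

lemma pf: "(y/c)^k /\<^sub>R fact k = (y::real)^k / (c^k * fact k)"
  by (simp add: divide_inverse power_mult_distrib power_inverse mult.commute mult.left_commute)

lemma cosh_dom3: "cosh (x::real) \<le> 3 * exp (x^2/6) - 2"
proof -
  let ?a = "\<lambda>k. x^(2*k) / fact (2*k)"
  let ?b = "\<lambda>k. 3 * ((x^2/6)^k /\<^sub>R fact k) - (if k = 0 then 2 else 0)"
  have sb: "?b sums (3 * exp (x^2/6) - 2)"
  proof (rule sums_diff)
    show "(\<lambda>k. 3 * ((x^2/6)^k /\<^sub>R fact k)) sums (3 * exp (x^2/6))"
      by (rule sums_mult) (rule exp_converges)
    show "(\<lambda>k. if k = 0 then 2 else 0) sums (2::real)"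
      using sums_single[where i=0 and f="\<lambda>_. 2::real"] by simp
  qed
  have le: "?a k \<le> ?b k" for k
  proof (cases "k = 0")
    case True then show ?thesis by simp
  next
    case False
    have f0: "real (6^k * fact k) \<le> real (3 * fact (2*k))"
      using fact_ratio6[of k] by (simp only: of_nat_le_iff)
    have f: "6^k * fact k \<le> 3 * (fact (2*k) :: real)"
      using f0 by simp
    have "?a k = (x^2)^k / fact (2*k)" by (simp add: power_mult)
    also have "\<dots> \<le> (x^2)^k / (6^k * fact k / 3)"
      by (rule divide_left_mono) (use f in \<open>simp_all\<close>)
    also have "\<dots> = 3 * ((x^2)^k / (6^k * fact k))" by simp
    also have "\<dots> = 3 * ((x^2/6)^k /\<^sub>R fact k)" by (simp only: pf)
    also have "\<dots> = ?b k" using False by simp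
    finally show ?thesis .
  qed
  show ?thesis using sums_le[OF le cosh_sums sb] .
qed

lemma cosh_dom2: "cosh (x::real) \<le> 2 * exp (x^2/4) - 1 - x^4/48"
proof -
  let ?a = "\<lambda>k. x^(2*k) / fact (2*k)"
  let ?b = "\<lambda>k. 2 * ((x^2/4)^k /\<^sub>R fact k) - (if k = 0 then 1 else 0) - (if k = 2 then x^4/48 else 0)"
  have sb: "?b sums (2 * exp (x^2/4) - 1 - x^4/48)"
  proof -
    have 1: "(\<lambda>k. 2 * ((x^2/4)^k /\<^sub>R fact k)) sums (2 * exp (x^2/4))"
      by (rule sums_mult) (rule exp_converges)
    have 2: "(\<lambda>k. if k = 0 then 1 else 0) sums (1::real)"
      using sums_single[where i=0 and f="\<lambda>_. 1::real"] by simp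
    have 3: "(\<lambda>k. if k = 2 then x^4/48 else 0) sums (x^4/48::real)"
      using sums_single[where i=2 and f="\<lambda>_. x^4/48::real"] by simp
    show ?thesis using sums_diff[OF sums_diff[OF 1 2] 3] by simp
  qed
  have le: "?a k \<le> ?b k" for k
  proof -
    consider "k = 0" | "k = 2" | "k \<noteq> 0" "k \<noteq> 2" by blast
    then show ?thesis
    proof cases
      case 1 then show ?thesis by simp
    next
      case 2
      have a: "x^(2*2) / fact (2*2) = x^4/24" by (simp add: fact_numeral)
      have b: "(x^2/4)^2 = x^4/16" by (simp add: power_divide flip: power_mult)
      show ?thesis using 2 by (simp add: a b fact_numeral)
    next
      case 3
      have f0: "real (4^k * fact k) \<le> real (2 * fact (2*k))"
        using fact_ratio4[of k] by (simp only: of_nat_le_iff)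
      have f: "4^k * fact k \<le> 2 * (fact (2*k) :: real)"
        using f0 by simp
      have "x^(2*k) / fact (2*k) = (x^2)^k / fact (2*k)" by (simp add: power_mult)
      also have "\<dots> \<le> (x^2)^k / (4^k * fact k / 2)"
        by (rule divide_left_mono) (use f in \<open>simp_all\<close>)
      also have "\<dots> = 2 * ((x^2)^k / (4^k * fact k))" by simp
      also have "\<dots> = 2 * ((x^2/4)^k /\<^sub>R fact k)" by (simp only: pf)
      finally show ?thesis using 3 by simp
    qed
  qed
  show ?thesis using sums_le[OF le cosh_sums sb] .
qed



definition dd :: "'n::finite itself \<Rightarrow> real" where "dd _ = real CARD('n)"

definition Hf :: "real ^ 'n::finite \<Rightarrow> real" where
  "Hf s = Mf s * exp (- ((norm s) ^ 2) / (2 * real CARD('n)))"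

definition Qf :: "real ^ 'n::finite \<Rightarrow> real" where
  "Qf s = (\<Sum>i\<in>UNIV. (s $ i) ^ 4) / (24 * real CARD('n)) - (norm s) ^ 4 / (8 * (real CARD('n)) ^ 2)"

definition rn :: "nat \<Rightarrow> real" where "rn n = real n powr (-1/4)"

lemma rn_sq: "real n * (rn n) ^ 2 = sqrt (real n)"
proof (cases "n = 0")
  case True then show ?thesis by (simp add: rn_def)
next
  case False
  then have np: "real n > 0" by simp
  have "(rn n) ^ 2 = real n powr (-1/2)" unfolding rn_def using np by (simp add: powr_power)
  then have "real n * (rn n) ^ 2 = real n powr (1 + (-1/2))" using np by (simp add: powr_mult_base)
  also have "\<dots> = real n powr (1/2)" by simp
  also have "\<dots> = sqrt (real n)" by (simp add: powr_half_sqrt)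
  finally show ?thesis .
qed

lemma rn_4: "n > 0 \<Longrightarrow> real n * (rn n) ^ 4 = 1"
proof -
  assume "n > 0"
  then have np: "real n > 0" by simp
  have "(rn n) ^ 4 = real n powr (-1)" unfolding rn_def using np by (simp add: powr_power)
  then have "real n * (rn n) ^ 4 = real n powr (1 + (-1))" using np by (simp add: powr_mult_base)
  then show ?thesis using np by simp
qed

lemma rn_pos: "n > 0 \<Longrightarrow> rn n > 0"
  unfolding rn_def by simp

lemma psi_n_Hf: "psi_n n t = Hf (rn n *\<^sub>R t) ^ n"
proof -
  let ?d = "real CARD('a)"
  have "measure_pmf.expectation (srw n) (\<lambda>w. exp (t \<bullet> (real n powr (-1/4) *\<^sub>R w)))
      = measure_pmf.expectation (srw n) (\<lambda>w. exp ((rn n *\<^sub>R t) \<bullet> w))"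
    by (simp add: rn_def)
  also have "\<dots> = Mf (rn n *\<^sub>R t) ^ n" by (rule mgf_srw)
  finally have E: "measure_pmf.expectation (srw n) (\<lambda>w. exp (t \<bullet> (real n powr (-1/4) *\<^sub>R w))) = Mf (rn n *\<^sub>R t) ^ n" .
  have "exp (- ((norm (rn n *\<^sub>R t)) ^ 2) / (2 * ?d)) ^ n = exp (real n * (- ((norm (rn n *\<^sub>R t)) ^ 2) / (2 * ?d)))"
    by (rule exp_of_nat_mult[symmetric])
  also have "real n * (- ((norm (rn n *\<^sub>R t)) ^ 2) / (2 * ?d)) = - (real n * (rn n) ^ 2) * (norm t) ^ 2 / (2 * ?d)"
    by (simp add: power_mult_distrib)
  also have "\<dots> = - sqrt (real n) * (norm t) ^ 2 / (2 * ?d)" by (simp add: rn_sq)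
  finally have X: "exp (- ((norm (rn n *\<^sub>R t)) ^ 2) / (2 * ?d)) ^ n = exp (- sqrt (real n) * (norm t) ^ 2 / (2 * ?d))" .
  show ?thesis unfolding psi_n_def Hf_def E power_mult_distrib X ..
qed



lemma norm_sq_sum: "(norm (s::real^'n::finite)) ^ 2 = (\<Sum>i\<in>UNIV. (s $ i) ^ 2)"
  by (simp only: power2_norm_eq_inner inner_vec_def) (simp add: power2_eq_square)

lemma comp_le_norm_sq: "(s $ i) ^ 2 \<le> (norm (s::real^'n::finite)) ^ 2"
  unfolding norm_sq_sum by (rule member_le_sum) auto

lemma sum_sq_le:
  fixes a :: "'i \<Rightarrow> real" assumes fin: "finite I" and nn: "\<And>i. i \<in> I \<Longrightarrow> 0 \<le> a i"
  shows "(\<Sum>i\<in>I. a i ^ 2) \<le> (\<Sum>i\<in>I. a i) ^ 2" and "(\<Sum>i\<in>I. a i ^ 3) \<le> (\<Sum>i\<in>I. a i) ^ 3"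
proof -
  let ?N = "\<Sum>i\<in>I. a i"
  have le: "a i \<le> ?N" if "i \<in> I" for i using fin nn that by (intro member_le_sum) auto
  have N0: "0 \<le> ?N" using nn by (simp add: sum_nonneg)
  have "(\<Sum>i\<in>I. a i ^ 2) \<le> (\<Sum>i\<in>I. a i * ?N)"
    by (rule sum_mono) (simp add: power2_eq_square le mult_left_mono nn)
  also have "\<dots> = ?N ^ 2" by (simp add: sum_distrib_right power2_eq_square)
  finally show "(\<Sum>i\<in>I. a i ^ 2) \<le> ?N ^ 2" .
  have "(\<Sum>i\<in>I. a i ^ 3) \<le> (\<Sum>i\<in>I. a i * ?N ^ 2)"
  proof (rule sum_mono)
    fix i assume i: "i \<in> I"
    have "a i ^ 2 \<le> ?N ^ 2" using le[OF i] nn[OF i] by (simp add: power_mono)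
    then have "a i * a i ^ 2 \<le> a i * ?N ^ 2" using nn[OF i] by (rule mult_left_mono)
    then show "a i ^ 3 \<le> a i * ?N ^ 2" by (simp add: power3_eq_cube power2_eq_square)
  qed
  also have "\<dots> = ?N ^ 3" by (subst sum_distrib_right[symmetric]) (simp add: power3_eq_cube power2_eq_square)
  finally show "(\<Sum>i\<in>I. a i ^ 3) \<le> ?N ^ 3" .
qed

lemma ln_lower: assumes "0 \<le> (a::real)" shows "a - a ^ 2 / 2 \<le> ln (1 + a)"
proof -
  let ?f = "\<lambda>x::real. ln (1 + x) - x + x ^ 2 / 2"
  have "?f 0 \<le> ?f a"
  proof (rule DERIV_nonneg_imp_nondecreasing[OF assms])
    fix x :: real assume x: "0 \<le> x" "x \<le> a"
    have "DERIV ?f x :> (1 / (1 + x) - 1 + x)"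
      using x by (auto intro!: derivative_eq_intros)
    moreover have "1 / (1 + x) - 1 + x = x ^ 2 / (1 + x)" using x by (simp add: field_simps power2_eq_square)
    moreover have "0 \<le> x ^ 2 / (1 + x)" using x by simp
    ultimately show "\<exists>y. DERIV ?f x :> y \<and> 0 \<le> y" by auto
  qed
  then show ?thesis by simp
qed

lemma ln_upper: assumes "0 \<le> (a::real)" shows "ln (1 + a) \<le> a - a ^ 2 / 2 + a ^ 3 / 3"
proof -
  let ?f = "\<lambda>x::real. x - x ^ 2 / 2 + x ^ 3 / 3 - ln (1 + x)"
  have "?f 0 \<le> ?f a"
  proof (rule DERIV_nonneg_imp_nondecreasing[OF assms])
    fix x :: real assume x: "0 \<le> x" "x \<le> a"
    have "DERIV ?f x :> (1 - x + x ^ 2 - 1 / (1 + x))"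
      using x by (auto intro!: derivative_eq_intros simp: power2_eq_square)
    moreover have "1 - x + x ^ 2 - 1 / (1 + x) = x ^ 3 / (1 + x)" using x by (simp add: field_simps power2_eq_square power3_eq_cube)
    moreover have "0 \<le> x ^ 3 / (1 + x)" using x by simp
    ultimately show "\<exists>y. DERIV ?f x :> y \<and> 0 \<le> y" by auto
  qed
  then show ?thesis by simp
qed

lemma Mf_pos: "Mf s > 0"
  unfolding Mf_def by (intro divide_pos_pos sum_pos) auto

lemma Hf_pos: "Hf s > 0"
  unfolding Hf_def by (intro mult_pos_pos Mf_pos exp_gt_zero)



lemma div_le_self_real: assumes "0 \<le> (a::real)" "1 \<le> d" shows "a / d \<le> a"
proof -
  have "a * 1 \<le> a * d" using assms by (intro mult_left_mono) auto
  then show ?thesis using assms by (simp add: divide_le_eq)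
qed

lemma lin_aux: "a - b \<le> l \<Longrightarrow> l \<le> a - b + c \<Longrightarrow> 0 \<le> e \<Longrightarrow> e \<le> n/240 \<Longrightarrow> 0 \<le> p \<Longrightarrow> p \<le> n/6 \<Longrightarrow> c \<le> n/3 \<Longrightarrow> 0 \<le> n \<Longrightarrow> \<bar>(l - a + b) + e - p/2\<bar> \<le> (n::real)"
  by linarith

lemma expansion:
  fixes s :: "real ^ 'n::finite"
  assumes N1: "(norm s) ^ 2 \<le> 1"
  shows "\<bar>ln (Hf s) - Qf s\<bar> \<le> 2 * (norm s) ^ 6"
proof -
  define d where "d = real CARD('n)"
  define N where "N = (norm s) ^ 2"
  define F where "F = (\<Sum>i\<in>UNIV. (s $ i) ^ 4)"
  define S6 where "S6 = (\<Sum>i\<in>UNIV. (s $ i) ^ 6)"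
  define C where "C = (\<Sum>i\<in>UNIV. cosh (s $ i) - 1)"
  have d1: "d \<ge> 1" unfolding d_def by simp
  have N0: "N \<ge> 0" unfolding N_def by simp
  have N1': "N \<le> 1" using N1 unfolding N_def .
  have Nsum: "N = (\<Sum>i\<in>UNIV. (s $ i) ^ 2)" unfolding N_def by (rule norm_sq_sum)
  have abs1: "\<bar>s $ i\<bar> \<le> 1" for i
  proof -
    have "(s $ i) ^ 2 \<le> 1" using comp_le_norm_sq[of s i] N1 by linarith
    then show ?thesis by (simp add: abs_square_le_1)
  qed
  have F_eq: "F = (\<Sum>i\<in>UNIV. ((s $ i) ^ 2) ^ 2)" unfolding F_def by (simp flip: power_mult)
  have S6_eq: "S6 = (\<Sum>i\<in>UNIV. ((s $ i) ^ 2) ^ 3)" unfolding S6_def by (simp flip: power_mult)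
  have FN: "F \<le> N ^ 2" unfolding F_eq Nsum by (rule sum_sq_le) auto
  have SN: "S6 \<le> N ^ 3" unfolding S6_eq Nsum by (rule sum_sq_le) auto
  have F0: "F \<ge> 0" unfolding F_def by (simp add: sum_nonneg)
  have S60: "S6 \<ge> 0" unfolding S6_def by (simp add: sum_nonneg)
  have C_lo: "0 \<le> C - N/2 - F/24"
  proof -
    have "0 \<le> (\<Sum>i\<in>UNIV. cosh (s $ i) - 1 - (s $ i) ^ 2/2 - (s $ i) ^ 4/24)"
      by (rule sum_nonneg) (rule cosh_rem(1)[OF abs1])
    also have "\<dots> = C - N/2 - F/24"
      unfolding C_def Nsum F_def by (simp add: sum_subtractf sum_divide_distrib)
    finally show ?thesis .
  qed
  have C_hi: "C - N/2 - F/24 \<le> S6/240"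
  proof -
    have "(\<Sum>i\<in>UNIV. cosh (s $ i) - 1 - (s $ i) ^ 2/2 - (s $ i) ^ 4/24) \<le> (\<Sum>i\<in>UNIV. (s $ i) ^ 6/240)"
      by (rule sum_mono) (rule cosh_rem(2)[OF abs1])
    also have "(\<Sum>i\<in>UNIV. cosh (s $ i) - 1 - (s $ i) ^ 2/2 - (s $ i) ^ 4/24) = C - N/2 - F/24"
      unfolding C_def Nsum F_def by (simp add: sum_subtractf sum_divide_distrib)
    finally show ?thesis unfolding S6_def by (simp add: sum_divide_distrib)
  qed
  define A where "A = C / d"
  have Mf_eq: "Mf s = 1 + A"
  proof -
    have "(\<Sum>i\<in>UNIV. cosh (s $ i)) = C + d" unfolding C_def d_def by (simp add: sum_subtractf)
    then show ?thesis unfolding Mf_def A_def using d1 by (simp add: field_simps d_def)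
  qed
  define E1 where "E1 = A - N/(2*d) - F/(24*d)"
  have E1_eq: "E1 = (C - N/2 - F/24) / d" unfolding E1_def A_def using d1 by (simp add: field_simps)
  have E1_lo: "0 \<le> E1" unfolding E1_eq using C_lo d1 by simp
  have E1_hi: "E1 \<le> N ^ 3 / 240"
  proof -
    have "E1 \<le> (C - N/2 - F/24)" unfolding E1_eq using C_lo d1 by (rule div_le_self_real)
    also have "\<dots> \<le> N ^ 3 / 240" using C_hi SN by linarith
    finally show ?thesis .
  qed
  have NN: "N ^ 2 \<le> N" using mult_left_le[OF N1' N0] by (simp add: power2_eq_square)
  have NNN: "N ^ 3 \<le> N ^ 2"
  proof -
    have "N ^ 2 * N \<le> N ^ 2" by (rule mult_left_le[OF N1']) simp
    then show ?thesis by (simp add: power3_eq_cube power2_eq_square)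
  qed
  have t1: "N / (2*d) \<le> N / 2"
  proof -
    have "(N/2) / d \<le> N/2" using N0 d1 by (intro div_le_self_real) auto
    then show ?thesis by (simp add: field_simps)
  qed
  have t2: "F / (24*d) \<le> N ^ 2 / 24"
  proof -
    have "(F/24) / d \<le> F/24" using F0 d1 by (intro div_le_self_real) auto
    then show ?thesis using FN by (simp add: field_simps)
  qed
  have t2': "0 \<le> F / (24*d)" using F0 d1 by simp
  have t3: "0 \<le> N / (2*d)" using N0 d1 by simp
  have A_def2: "A = N/(2*d) + F/(24*d) + E1" unfolding E1_def by simp
  have A0: "0 \<le> A" using A_def2 t2' t3 E1_lo by linarith
  have AN: "A \<le> N" using A_def2 t1 t2 E1_hi NN NNN N0 by linarith
  define L where "L = ln (1 + A)"
  have L_lo: "A - A ^ 2 / 2 \<le> L" unfolding L_def using A0 by (rule ln_lower)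
  have L_hi: "L \<le> A - A ^ 2 / 2 + A ^ 3 / 3" unfolding L_def using A0 by (rule ln_upper)
  have lnH: "ln (Hf s) = L - N / (2*d)"
  proof -
    have "ln (Hf s) = ln (Mf s) + ln (exp (- ((norm s) ^ 2) / (2 * real CARD('n))))"
      unfolding Hf_def using Mf_pos[of s] by (simp add: ln_mult)
    also have "\<dots> = L - N / (2*d)" unfolding L_def Mf_eq N_def d_def by simp
    finally show ?thesis .
  qed
  have Qf_eq: "Qf s = F/(24*d) - N ^ 2 / (8 * d ^ 2)" unfolding Qf_def F_def N_def d_def
    by (simp add: power2_eq_square power4_eq_xxxx)
  define X where "X = A - N/(2*d)"
  have X_eq: "X = F/(24*d) + E1" unfolding X_def A_def2 by simp
  have X0: "0 \<le> X" using X_eq t2' E1_lo by linarith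
  have XN: "X \<le> N ^ 2 / 12" using X_eq t2 E1_hi NNN zero_le_power2[of N] by linarith
  have Y0: "0 \<le> A + N/(2*d)" using A0 t3 by linarith
  have YN: "A + N/(2*d) \<le> 2 * N" using AN t1 N0 by linarith
  have sq: "A ^ 2 - (N/(2*d)) ^ 2 = X * (A + N/(2*d))" unfolding X_def by (simp add: power2_eq_square algebra_simps)
  have sq0: "0 \<le> X * (A + N/(2*d))" using X0 Y0 by simp
  have sqN: "X * (A + N/(2*d)) \<le> (N ^ 2 / 12) * (2 * N)" using XN YN X0 Y0 by (intro mult_mono) auto
  have sqN': "(N ^ 2 / 12) * (2 * N) = N ^ 3 / 6" by (simp add: power2_eq_square power3_eq_cube)
  have A3: "A ^ 3 \<le> N ^ 3" using A0 AN by (simp add: power_mono)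
  have key: "ln (Hf s) - Qf s = (L - A + A ^ 2 / 2) + E1 - (A ^ 2 - (N/(2*d)) ^ 2) / 2"
    unfolding lnH Qf_eq E1_def using d1 by (simp add: power2_eq_square field_simps)
  have P0: "0 \<le> X * (A + N/(2*d))" by (rule sq0)
  have PN: "X * (A + N/(2*d)) \<le> N ^ 3 / 6" using sqN sqN' by simp
  have A3': "A ^ 3 / 3 \<le> N ^ 3 / 3" using A3 by simp
  have "\<bar>(L - A + A ^ 2 / 2) + E1 - (X * (A + N/(2*d))) / 2\<bar> \<le> N ^ 3"
    by (rule lin_aux[OF L_lo L_hi E1_lo E1_hi P0 PN A3' zero_le_power[OF N0, of 3]])
  then have "\<bar>ln (Hf s) - Qf s\<bar> \<le> N ^ 3" unfolding key sq .
  also have "N ^ 3 \<le> 2 * (norm s) ^ 6" unfolding N_def using N0 by (simp flip: power_mult)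
  finally show ?thesis .
qed



lemma Qf_scale: "Qf (c *\<^sub>R t) = c ^ 4 * Qf (t :: real^'n::finite)"
proof -
  have "(norm (c *\<^sub>R t)) ^ 4 = c ^ 4 * (norm t) ^ 4"
    by (simp add: power_mult_distrib power_even_abs_numeral)
  moreover have "(\<Sum>i\<in>UNIV. ((c *\<^sub>R t) $ i) ^ 4) = c ^ 4 * (\<Sum>i\<in>UNIV. (t $ i) ^ 4)"
    by (simp add: power_mult_distrib sum_distrib_left)
  ultimately show ?thesis unfolding Qf_def by (simp add: field_simps)
qed

lemma Qf_bound: "\<bar>Qf (t :: real^'n::finite)\<bar> \<le> (norm t) ^ 4"
proof -
  define d where "d = real CARD('n)"
  have d1: "d \<ge> 1" unfolding d_def by simp
  define N where "N = (norm t) ^ 2"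
  have N0: "0 \<le> N" unfolding N_def by simp
  have F: "(\<Sum>i\<in>UNIV. (t $ i) ^ 4) \<le> N ^ 2"
  proof -
    have "(\<Sum>i\<in>UNIV. ((t $ i) ^ 2) ^ 2) \<le> (\<Sum>i\<in>UNIV. (t $ i) ^ 2) ^ 2" by (rule sum_sq_le) auto
    then show ?thesis unfolding N_def norm_sq_sum by (simp flip: power_mult)
  qed
  have F0: "0 \<le> (\<Sum>i\<in>UNIV. (t $ i) ^ 4)" by (simp add: sum_nonneg)
  have a: "(\<Sum>i\<in>UNIV. (t $ i) ^ 4) / (24 * d) \<le> N ^ 2"
  proof -
    have "(\<Sum>i\<in>UNIV. (t $ i) ^ 4) / (24 * d) \<le> (\<Sum>i\<in>UNIV. (t $ i) ^ 4)"
      using F0 d1 by (intro div_le_self_real) auto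
    then show ?thesis using F by linarith
  qed
  have a0: "0 \<le> (\<Sum>i\<in>UNIV. (t $ i) ^ 4) / (24 * d)" using F0 d1 by simp
  have d2: "1 \<le> d ^ 2" using d1 by (simp add: one_le_power)
  have b: "N ^ 2 / (8 * d ^ 2) \<le> N ^ 2"
    using d2 by (intro div_le_self_real) auto
  have b0: "0 \<le> N ^ 2 / (8 * d ^ 2)" by simp
  have n4: "(norm t) ^ 4 = N ^ 2" unfolding N_def by (simp flip: power_mult)
  have "Qf t = (\<Sum>i\<in>UNIV. (t $ i) ^ 4) / (24 * d) - N ^ 2 / (8 * d ^ 2)"
    unfolding Qf_def d_def N_def by (simp flip: power_mult)
  then show ?thesis unfolding n4 abs_le_iff using a a0 b b0 by (intro conjI) linarith+
qed

lemma psi_n_pos: "psi_n n t > 0"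
  unfolding psi_n_Hf by (intro zero_less_power Hf_pos)

lemma pt_bound:
  fixes t :: "real ^ 'n::finite"
  assumes n: "n > 0" and tR: "norm t \<le> R" and small: "(rn n) ^ 2 * R ^ 2 \<le> 1"
  shows "\<bar>ln (psi_n n t) - Qf t\<bar> \<le> 2 * (rn n) ^ 2 * R ^ 6"
proof -
  define r where "r = rn n"
  have r0: "r > 0" unfolding r_def using n by (rule rn_pos)
  have nr4: "real n * r ^ 4 = 1" unfolding r_def using n by (rule rn_4)
  have R0: "0 \<le> R" using tR norm_ge_zero order_trans by blast
  have nrm: "norm (r *\<^sub>R t) = r * norm t" using r0 by simp
  have sm: "(norm (r *\<^sub>R t)) ^ 2 \<le> 1"
  proof -
    have "(norm (r *\<^sub>R t)) ^ 2 = r ^ 2 * (norm t) ^ 2" unfolding nrm by (simp add: power_mult_distrib)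
    also have "\<dots> \<le> r ^ 2 * R ^ 2" using tR by (intro mult_left_mono power_mono) auto
    also have "\<dots> \<le> 1" using small unfolding r_def .
    finally show ?thesis .
  qed
  have ex: "\<bar>ln (Hf (r *\<^sub>R t)) - Qf (r *\<^sub>R t)\<bar> \<le> 2 * (norm (r *\<^sub>R t)) ^ 6"
    by (rule expansion[OF sm])
  have lnpsi: "ln (psi_n n t) = real n * ln (Hf (r *\<^sub>R t))"
    unfolding psi_n_Hf r_def by (simp add: ln_realpow)
  have Qt: "Qf t = real n * Qf (r *\<^sub>R t)"
    unfolding Qf_scale using nr4 by (simp add: mult.assoc[symmetric])
  have "\<bar>ln (psi_n n t) - Qf t\<bar> = real n * \<bar>ln (Hf (r *\<^sub>R t)) - Qf (r *\<^sub>R t)\<bar>"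
    unfolding lnpsi Qt by (simp add: right_diff_distrib[symmetric] abs_mult)
  also have "\<dots> \<le> real n * (2 * (norm (r *\<^sub>R t)) ^ 6)"
    using ex by (intro mult_left_mono) auto
  also have "\<dots> = 2 * (real n * r ^ 4) * r ^ 2 * (norm t) ^ 6"
    unfolding nrm by (simp add: power_mult_distrib algebra_simps flip: power_add)
  also have "\<dots> = 2 * r ^ 2 * (norm t) ^ 6" using nr4 by simp
  also have "\<dots> \<le> 2 * r ^ 2 * R ^ 6" using tR by (intro mult_left_mono power_mono) auto
  finally show ?thesis unfolding r_def .
qed

lemma exp_diff_bound:
  fixes a b :: real assumes "\<bar>a - b\<bar> \<le> 1"
  shows "\<bar>exp a - exp b\<bar> \<le> 3 * exp b * \<bar>a - b\<bar>"
proof -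
  define x where "x = a - b"
  have ea: "exp a = exp b * exp x" unfolding x_def by (simp add: exp_diff)
  have lo: "x \<le> exp x - 1" using exp_ge_add_one_self[of x] by linarith
  have hi: "exp x - 1 \<le> x * exp x"
  proof -
    have "1 - x \<le> exp (- x)" using exp_ge_add_one_self[of "-x"] by linarith
    then have "(1 - x) * exp x \<le> exp (-x) * exp x" by (intro mult_right_mono) auto
    then show ?thesis by (simp add: exp_minus field_simps)
  qed
  have ex3: "exp x \<le> 3"
  proof -
    have "exp x \<le> exp 1" using assms unfolding x_def by simp
    also have "exp (1::real) \<le> 3" using exp_le by simp
    finally show ?thesis .
  qed
  have "\<bar>exp x - 1\<bar> \<le> 3 * \<bar>x\<bar>"
  proof (cases "x \<ge> 0")
    case True
    then have "x * exp x \<le> x * 3" using ex3 by (intro mult_left_mono) auto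
    then show ?thesis using lo hi True by simp
  next
    case False
    then have "x * exp x \<ge> x" using exp_le_one_iff[of x] by (simp add: mult_le_cancel_left1)
    then show ?thesis using lo hi False by simp
  qed
  then have "exp b * \<bar>exp x - 1\<bar> \<le> exp b * (3 * \<bar>x\<bar>)" by (intro mult_left_mono) auto
  moreover have "\<bar>exp a - exp b\<bar> = exp b * \<bar>exp x - 1\<bar>"
  proof -
    have "exp a - exp b = exp b * (exp x - 1)" unfolding ea by (simp add: algebra_simps)
    then show ?thesis by (simp add: abs_mult)
  qed
  ultimately show ?thesis unfolding x_def by simp
qed



lemma rn_sq_tendsto: "((\<lambda>n. (rn n) ^ 2) \<longlongrightarrow> 0) sequentially"
proof -
  have "((\<lambda>n. real n powr (-1/4)) \<longlongrightarrow> 0) sequentially"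
    by (rule tendsto_neg_powr) (auto intro: filterlim_real_sequentially)
  then have "((\<lambda>n. (real n powr (-1/4)) ^ 2) \<longlongrightarrow> 0 ^ 2) sequentially" by (rule tendsto_power)
  then show ?thesis unfolding rn_def by simp
qed

lemma unif_conv:
  assumes K: "compact (K :: (real^'n::finite) set)"
  shows "uniform_limit K (\<lambda>n. psi_n n :: real ^ 'n \<Rightarrow> real) (\<lambda>t. exp (Qf t)) sequentially"
proof -
  obtain R where R0: "R > 0" and KR: "\<And>t. t \<in> K \<Longrightarrow> norm t \<le> R"
    using compact_imp_bounded[OF K] unfolding bounded_pos by auto
  show ?thesis unfolding uniform_limit_iff
  proof (intro allI impI)
    fix e :: real assume e: "e > 0"
    define B where "B = exp (R ^ 4)"
    have B0: "B > 0" unfolding B_def by simp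
    define \<delta> where "\<delta> = min (1 / R ^ 2) (min (1 / (2 * R ^ 6)) (e / (6 * B * R ^ 6)))"
    have \<delta>0: "\<delta> > 0" unfolding \<delta>_def using R0 e B0 by auto
    have ev: "\<forall>\<^sub>F n in sequentially. (rn n) ^ 2 < \<delta> \<and> n > 0"
      using order_tendstoD(2)[OF rn_sq_tendsto \<delta>0] eventually_gt_at_top[of 0]
      by (eventually_elim) auto
    show "\<forall>\<^sub>F n in sequentially. \<forall>t\<in>K. dist (psi_n n t) (exp (Qf t)) < e"
      using ev
    proof eventually_elim
      case (elim n)
      then have r\<delta>: "(rn n) ^ 2 < \<delta>" and n0: "n > 0" by auto
      define r2 where "r2 = (rn n) ^ 2"
      have r20: "0 \<le> r2" unfolding r2_def by simp
      have c1: "r2 * R ^ 2 \<le> 1"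
      proof -
        have "r2 \<le> 1 / R ^ 2" using r\<delta> unfolding \<delta>_def r2_def by auto
        then show ?thesis using R0 by (simp add: field_simps)
      qed
      have c2: "2 * r2 * R ^ 6 \<le> 1"
      proof -
        have "r2 \<le> 1 / (2 * R ^ 6)" using r\<delta> unfolding \<delta>_def r2_def by auto
        then show ?thesis using R0 by (simp add: field_simps)
      qed
      have c3: "3 * B * (2 * r2 * R ^ 6) < e"
      proof -
        have "r2 < e / (6 * B * R ^ 6)" using r\<delta> unfolding \<delta>_def r2_def by auto
        then show ?thesis using R0 B0 by (simp add: field_simps)
      qed
      show "\<forall>t\<in>K. dist (psi_n n t) (exp (Qf t)) < e"
      proof
        fix t assume t: "t \<in> K"
        have tR: "norm t \<le> R" using KR[OF t] .
        have pb: "\<bar>ln (psi_n n t) - Qf t\<bar> \<le> 2 * r2 * R ^ 6"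
          unfolding r2_def by (rule pt_bound[OF n0 tR c1[unfolded r2_def]])
        have Qb: "exp (Qf t) \<le> B"
        proof -
          have "Qf t \<le> (norm t) ^ 4" using Qf_bound[of t] by simp
          also have "\<dots> \<le> R ^ 4" using tR by (intro power_mono) auto
          finally show ?thesis unfolding B_def by simp
        qed
        have "dist (psi_n n t) (exp (Qf t)) = \<bar>exp (ln (psi_n n t)) - exp (Qf t)\<bar>"
          using psi_n_pos[of n t] by (simp add: dist_real_def)
        also have "\<dots> \<le> 3 * exp (Qf t) * \<bar>ln (psi_n n t) - Qf t\<bar>"
          by (rule exp_diff_bound) (use pb c2 in linarith)
        also have "\<dots> \<le> 3 * B * (2 * r2 * R ^ 6)"
          using Qb pb B0 by (intro mult_mono) auto
        also have "\<dots> < e" by (rule c3)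
        finally show "dist (psi_n n t) (exp (Qf t)) < e" .
      qed
    qed
  qed
qed



lemma Hf_cont: "continuous_on UNIV (Hf :: real^'n::finite \<Rightarrow> real)"
  unfolding Hf_def[abs_def] Mf_def by (intro continuous_intros) auto

lemma psi_n_meas: "(psi_n n :: real^'n::finite \<Rightarrow> real) \<in> borel_measurable lborel"
proof -
  have "continuous_on UNIV (\<lambda>t::real^'n. Hf (rn n *\<^sub>R t) ^ n)"
    by (intro continuous_intros continuous_on_compose2[OF Hf_cont]) auto
  then show ?thesis unfolding psi_n_Hf[abs_def] by (simp add: borel_measurable_continuous_onI)
qed

lemma Qf_cont: "continuous_on UNIV (Qf :: real^'n::finite \<Rightarrow> real)"
  unfolding Qf_def[abs_def] by (intro continuous_intros) auto

lemma assemble: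
  fixes psi :: "real^'n::finite \<Rightarrow> real" and G :: "real^'n \<Rightarrow> real"
  assumes psiQ: "\<And>t. psi t = exp (Qf t)"
    and Gi: "integrable lborel G"
    and dom: "\<And>n t. n > 0 \<Longrightarrow> psi_n n t \<le> G t"
  shows "srw_conv psi"
proof -
  have psi_eq: "psi = (\<lambda>t. exp (Qf t))" using psiQ by auto
  have U: "\<forall>K :: (real ^ 'n) set. compact K \<longrightarrow> uniform_limit K (\<lambda>n. psi_n n :: real ^ 'n \<Rightarrow> real) psi sequentially"
    unfolding psi_eq using unif_conv by blast
  have lim: "(\<lambda>n. psi_n n t) \<longlonglongrightarrow> psi t" for t
    by (rule tendsto_uniform_limitI[OF U[rule_format, of "{t}"]]) auto
  have psi_meas: "psi \<in> borel_measurable lborel"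
  proof -
    have "continuous_on UNIV (\<lambda>t::real^'n. exp (Qf t))"
      by (intro continuous_intros continuous_on_compose2[OF Qf_cont]) auto
    then show ?thesis unfolding psi_eq by (simp add: borel_measurable_continuous_onI)
  qed
  have psi0: "0 \<le> psi t" for t unfolding psiQ by simp
  have psiG: "psi t \<le> G t" for t
  proof (rule LIMSEQ_le_const2[OF lim[of t]])
    show "\<exists>N. \<forall>n\<ge>N. psi_n n t \<le> G t" using dom by (intro exI[of _ 1]) auto
  qed
  have G0: "0 \<le> G t" for t using psi0[of t] psiG[of t] by linarith
  have psi_int: "integrable lborel psi"
    by (rule Bochner_Integration.integrable_bound[OF Gi psi_meas]) (use psi0 psiG G0 in auto)
  have psin_int: "integrable lborel (psi_n n :: real ^ 'n \<Rightarrow> real)" if "n > 0" for n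
    by (rule Bochner_Integration.integrable_bound[OF Gi psi_n_meas])
       (intro AE_I2, simp add: psi_n_pos abs_of_pos abs_of_nonneg G0 dom[OF that])
  have ev: "\<forall>\<^sub>F n in sequentially. integrable lborel (psi_n n :: real ^ 'n \<Rightarrow> real)"
    by (rule eventually_mono[OF eventually_gt_at_top[of 0]]) (rule psin_int)
  have L1: "(\<lambda>i. LINT (t :: real ^ 'n)|lborel. \<bar>psi_n (Suc i) t - psi t\<bar>) \<longlonglongrightarrow> (LINT (t :: real ^ 'n)|lborel. 0)"
  proof (rule integral_dominated_convergence[where w = "\<lambda>t. 2 * G t"])
    show "(\<lambda>t. 0::real) \<in> borel_measurable lborel" by simp
    show "(\<lambda>t. \<bar>psi_n (Suc i) t - psi t\<bar>) \<in> borel_measurable lborel" for i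
      using psi_n_meas psi_meas by measurable
    show "integrable lborel (\<lambda>t. 2 * G t)" using Gi by simp
    show "AE t in lborel. (\<lambda>i. \<bar>psi_n (Suc i) t - psi t\<bar>) \<longlonglongrightarrow> 0"
    proof (rule AE_I2)
      fix t
      have "(\<lambda>i. psi_n (Suc i) t) \<longlonglongrightarrow> psi t" using lim[of t] by (rule LIMSEQ_Suc)
      then have "(\<lambda>i. psi_n (Suc i) t - psi t) \<longlonglongrightarrow> psi t - psi t" by (intro tendsto_diff tendsto_const)
      then have "(\<lambda>i. \<bar>psi_n (Suc i) t - psi t\<bar>) \<longlonglongrightarrow> \<bar>psi t - psi t\<bar>" by (rule tendsto_rabs)
      then show "(\<lambda>i. \<bar>psi_n (Suc i) t - psi t\<bar>) \<longlonglongrightarrow> 0" by simp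
    qed
    show "AE t in lborel. norm \<bar>psi_n (Suc i) t - psi t\<bar> \<le> 2 * G t" for i
    proof (rule AE_I2)
      fix t
      have a: "psi_n (Suc i) t \<le> G t" by (rule dom) simp
      have b: "0 < psi_n (Suc i) t" by (rule psi_n_pos)
      show "norm \<bar>psi_n (Suc i) t - psi t\<bar> \<le> 2 * G t" using a b psi0[of t] psiG[of t] by simp
    qed
  qed
  then have L1': "(\<lambda>i. LINT (t :: real ^ 'n)|lborel. \<bar>psi_n (Suc i) t - psi t\<bar>) \<longlonglongrightarrow> 0" by simp
  have L1'': "((\<lambda>n. LINT (t :: real ^ 'n)|lborel. \<bar>psi_n n t - psi t\<bar>) \<longlongrightarrow> 0) sequentially"
    using L1' by (rule LIMSEQ_imp_Suc)
  show ?thesis unfolding srw_conv_def using U psi_int ev L1'' by blast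
qed



lemma gauss1:
  fixes a :: real assumes a: "a > 0"
  shows "integrable lborel (\<lambda>x::real. exp (- a * x ^ 2))"
    and "(\<integral>\<^sup>+x. ennreal (exp (- a * x ^ 2)) \<partial>lborel) = ennreal (sqrt (pi / a))"
proof -
  define \<sigma> where "\<sigma> = 1 / sqrt (2 * a)"
  have \<sigma>0: "\<sigma> > 0" unfolding \<sigma>_def using a by simp
  have s2: "\<sigma> ^ 2 = 1 / (2 * a)" unfolding \<sigma>_def using a by (simp add: power_divide)
  have eq: "exp (- a * x ^ 2) = sqrt (pi / a) * normal_density 0 \<sigma> x" for x
  proof -
    have "sqrt (2 * pi * \<sigma>\<^sup>2) = sqrt (pi / a)" using s2 a by simp
    moreover have "- (x - 0)\<^sup>2 / (2 * \<sigma>\<^sup>2) = - a * x ^ 2" using a by (simp add: s2 field_simps)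
    moreover have "sqrt (pi / a) > 0" using a by simp
    ultimately show ?thesis using a unfolding normal_density_def by simp
  qed
  have int: "integrable lborel (\<lambda>x. sqrt (pi / a) * normal_density 0 \<sigma> x)"
    using \<sigma>0 by (intro integrable_mult_right integrable_normal_density)
  show i1: "integrable lborel (\<lambda>x::real. exp (- a * x ^ 2))" unfolding eq by (rule int)
  have nd1: "(\<integral>x. normal_density 0 \<sigma> x \<partial>lborel) = 1" by (rule integral_normal_density[OF \<sigma>0])
  have "(\<integral>x. exp (- a * x ^ 2) \<partial>lborel) = (\<integral>x. sqrt (pi / a) * normal_density 0 \<sigma> x \<partial>lborel)"
    by (simp only: eq)
  also have "\<dots> = sqrt (pi / a)" using nd1 by simp
  finally have "(\<integral>x. exp (- a * x ^ 2) \<partial>lborel) = sqrt (pi / a)" .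
  then show "(\<integral>\<^sup>+x. ennreal (exp (- a * x ^ 2)) \<partial>lborel) = ennreal (sqrt (pi / a))"
    using nn_integral_eq_integral[OF i1] by simp
qed

lemma gauss_n:
  fixes c :: real assumes c: "c > 0"
  shows "integrable lborel (\<lambda>t::real^'n::finite. exp (- c * (norm t) ^ 2))"
proof (rule integrableI_nonneg)
  show "(\<lambda>t::real^'n. exp (- c * (norm t) ^ 2)) \<in> borel_measurable lborel" by simp
  show "AE x in lborel. 0 \<le> exp (- c * (norm (x::real^'n)) ^ 2)" by simp
  have eq: "exp (- c * (norm t) ^ 2) = (\<Prod>b\<in>Basis. exp (- c * (t \<bullet> b) ^ 2))" for t :: "real^'n"
  proof -
    have "(norm t) ^ 2 = (\<Sum>b\<in>Basis. (t \<bullet> b) ^ 2)"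
      by (simp only: power2_norm_eq_inner euclidean_inner[of t t]) (simp add: power2_eq_square)
    then have "- c * (norm t) ^ 2 = (\<Sum>b\<in>Basis. - c * (t \<bullet> b) ^ 2)" by (simp add: sum_distrib_left)
    then show ?thesis by (simp add: exp_sum)
  qed
  have "(\<integral>\<^sup>+t. ennreal (exp (- c * (norm (t::real^'n)) ^ 2)) \<partial>lborel)
      = (\<integral>\<^sup>+t. (\<Prod>b\<in>Basis. ennreal (exp (- c * ((t::real^'n) \<bullet> b) ^ 2))) \<partial>lborel)"
    unfolding eq by (simp add: prod_ennreal)
  also have "\<dots> = (\<Prod>b\<in>(Basis::(real^'n) set). (\<integral>\<^sup>+x. ennreal (exp (- c * x ^ 2)) \<partial>lborel))"
    by (rule nn_integral_lborel_prod) auto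
  also have "\<dots> = (\<Prod>b\<in>(Basis::(real^'n) set). ennreal (sqrt (pi / c)))"
    using gauss1(2)[OF c] by simp
  also have "\<dots> < \<infinity>" using c by (subst prod_ennreal) auto
  finally show "(\<integral>\<^sup>+t. ennreal (exp (- c * (norm (t::real^'n)) ^ 2)) \<partial>lborel) < \<infinity>" .
qed

lemma Hf_large:
  fixes s :: "real^'n::finite"
  assumes big: "(norm s) ^ 2 \<ge> 16 * (real CARD('n)) ^ 2"
  shows "Hf s \<le> exp (- ((norm s) ^ 2) / (4 * real CARD('n)))"
proof -
  define d where "d = real CARD('n)"
  have d1: "d \<ge> 1" unfolding d_def by simp
  have c: "cosh (s $ i) \<le> exp (norm s)" for i
  proof -
    have "cosh (s $ i) \<le> exp \<bar>s $ i\<bar>"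
      unfolding cosh_field_def by (cases "s $ i \<ge> 0") (auto simp: field_simps)
    also have "\<dots> \<le> exp (norm s)" using component_le_norm_cart[of s i] by simp
    finally show ?thesis .
  qed
  have M: "Mf s \<le> exp (norm s)"
  proof -
    have "(\<Sum>i\<in>UNIV. cosh (s $ i)) \<le> (\<Sum>i\<in>(UNIV::'n set). exp (norm s))" by (rule sum_mono) (rule c)
    then have "(\<Sum>i\<in>UNIV. cosh (s $ i)) \<le> d * exp (norm s)" unfolding d_def by simp
    then show ?thesis unfolding Mf_def d_def[symmetric] using d1 by (simp add: divide_le_eq mult.commute)
  qed
  have ns: "4 * d \<le> norm s"
  proof -
    have "(4 * d) ^ 2 \<le> (norm s) ^ 2" using big unfolding d_def by (simp add: power_mult_distrib)
    then show ?thesis by (rule power2_le_imp_le) simp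
  qed
  have key: "norm s \<le> (norm s) ^ 2 / (4 * d)"
  proof -
    have "norm s * (4 * d) \<le> norm s * norm s" using ns by (intro mult_left_mono) auto
    then show ?thesis using d1 by (simp add: le_divide_eq power2_eq_square)
  qed
  have "Hf s \<le> exp (norm s) * exp (- ((norm s) ^ 2) / (2 * d))"
    unfolding Hf_def d_def using M by (intro mult_right_mono) auto
  also have "\<dots> = exp (norm s - ((norm s) ^ 2) / (2 * d))" by (simp add: mult_exp_exp)
  also have "\<dots> \<le> exp (- ((norm s) ^ 2) / (4 * d))"
  proof -
    have "(norm s) ^ 2 / (2 * d) = 2 * ((norm s) ^ 2 / (4 * d))" using d1 by (simp add: field_simps)
    then show ?thesis using key by simp
  qed
  finally show ?thesis unfolding d_def .
qed

lemma psi_n_large: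
  fixes t :: "real^'n::finite"
  assumes n: "n > 0" and big: "(norm (rn n *\<^sub>R t)) ^ 2 \<ge> 16 * (real CARD('n)) ^ 2"
  shows "psi_n n t \<le> exp (- ((norm t) ^ 2) / (4 * real CARD('n)))"
proof -
  define d where "d = real CARD('n)"
  have d1: "d \<ge> 1" unfolding d_def by simp
  have "psi_n n t = Hf (rn n *\<^sub>R t) ^ n" by (rule psi_n_Hf)
  also have "\<dots> \<le> exp (- ((norm (rn n *\<^sub>R t)) ^ 2) / (4 * d)) ^ n"
    using Hf_large[OF big] Hf_pos unfolding d_def by (intro power_mono) (auto intro: less_imp_le)
  also have "\<dots> = exp (real n * (- ((norm (rn n *\<^sub>R t)) ^ 2) / (4 * d)))" by (rule exp_of_nat_mult[symmetric])
  also have "real n * (- ((norm (rn n *\<^sub>R t)) ^ 2) / (4 * d)) = - (real n * (rn n) ^ 2) * (norm t) ^ 2 / (4 * d)"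
    by (simp add: power_mult_distrib)
  also have "\<dots> = - sqrt (real n) * (norm t) ^ 2 / (4 * d)" by (simp add: rn_sq)
  also have "exp \<dots> \<le> exp (- ((norm t) ^ 2) / (4 * d))"
  proof -
    have "1 \<le> sqrt (real n)" using n by simp
    then have "(norm t) ^ 2 \<le> sqrt (real n) * (norm t) ^ 2" by (simp add: mult_le_cancel_right1)
    then show ?thesis using d1 by (simp add: divide_right_mono)
  qed
  finally show ?thesis unfolding d_def .
qed



lemma norm2_2: "(norm (t::real^2)) ^ 2 = (t$1) ^ 2 + (t$2) ^ 2"
  unfolding norm_sq_sum by (simp add: sum_2)

lemma card2: "CARD(2) = 2" by simp

lemma psi2_Q: "psi2 t = exp (Qf t)"
proof -
  define a where "a = t$1"
  define b where "b = t$2"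
  have n4: "(norm t) ^ 4 = (a ^ 2 + b ^ 2) ^ 2"
  proof -
    have "(norm t) ^ 4 = ((norm t) ^ 2) ^ 2" by (simp flip: power_mult)
    then show ?thesis unfolding norm2_2 a_def b_def .
  qed
  have "Qf t = (a ^ 4 + b ^ 4) / 48 - (a ^ 2 + b ^ 2) ^ 2 / 32"
    unfolding Qf_def n4 card2 by (simp add: sum_2 a_def b_def)
  also have "\<dots> = - (a ^ 4 + b ^ 4 + 6 * a\<^sup>2 * b\<^sup>2) / 96"
    by (simp add: field_simps power2_eq_square power4_eq_xxxx)
  finally show ?thesis unfolding psi2_def a_def b_def by simp
qed

definition k2 :: real where "k2 = exp (-16) / 96"

lemma k2_pos: "k2 > 0" unfolding k2_def by simp

lemma lin2: fixes c1 c2 x1 x2 a b :: real shows "c1 \<le> 1 + 2*x1 - a/48 \<Longrightarrow> c2 \<le> 1 + 2*x2 - b/48 \<Longrightarrow> (c1+c2)/2 \<le> 1 + x1 + x2 - (a+b)/(96::real)"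
  by (simp add: field_simps)

lemma Hf2_small:
  fixes s :: "real^2"
  assumes N: "(norm s) ^ 2 \<le> 64"
  shows "Hf s \<le> exp (- k2 * ((s$1) ^ 4 + (s$2) ^ 4))"
proof -
  define x1 where "x1 = exp ((s$1) ^ 2 / 4) - 1"
  define x2 where "x2 = exp ((s$2) ^ 2 / 4) - 1"
  define F where "F = (s$1) ^ 4 + (s$2) ^ 4"
  define E where "E = exp ((norm s) ^ 2 / 4)"
  have x10: "x1 \<ge> 0" unfolding x1_def by simp
  have x20: "x2 \<ge> 0" unfolding x2_def by simp
  have F0: "F \<ge> 0" unfolding F_def by simp
  have E_eq: "E = (1 + x1) * (1 + x2)"
    unfolding E_def x1_def x2_def norm2_2 by (simp add: add_divide_distrib exp_add)
  have E0: "E > 0" unfolding E_def by simp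
  have E16: "E \<le> exp 16" unfolding E_def using N by simp
  have c1: "cosh (s$1) \<le> 1 + 2 * x1 - (s$1) ^ 4 / 48" using cosh_dom2[of "s$1"] unfolding x1_def by simp
  have c2: "cosh (s$2) \<le> 1 + 2 * x2 - (s$2) ^ 4 / 48" using cosh_dom2[of "s$2"] unfolding x2_def by simp
  have Meq: "Mf s = (cosh (s$1) + cosh (s$2)) / 2" unfolding Mf_def card2 by (simp add: sum_2)
  have M: "Mf s \<le> 1 + x1 + x2 - F / 96"
    unfolding Meq F_def by (rule lin2[OF c1 c2])
  have M2: "Mf s \<le> E - F / 96"
  proof -
    have "x1 * x2 \<ge> 0" using x10 x20 by simp
    then show ?thesis using M unfolding E_eq by (simp add: algebra_simps)
  qed
  have H_eq: "Hf s = Mf s / E"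
    unfolding Hf_def E_def by (simp add: exp_minus field_simps)
  have "Hf s \<le> (E - F / 96) / E" unfolding H_eq using M2 E0 by (simp add: divide_right_mono)
  also have "\<dots> = 1 - F / (96 * E)" using E0 by (simp add: field_simps)
  also have "\<dots> \<le> 1 - k2 * F"
  proof -
    have "F / (96 * exp 16) \<le> F / (96 * E)" using F0 E0 E16 by (intro divide_left_mono) auto
    moreover have "k2 * F = F / (96 * exp 16)" unfolding k2_def by (simp add: exp_minus field_simps)
    ultimately show ?thesis by linarith
  qed
  also have "\<dots> \<le> exp (- k2 * F)" using exp_ge_add_one_self[of "- k2 * F"] by simp
  finally show ?thesis unfolding F_def .
qed

definition G2 :: "real^2 \<Rightarrow> real" where
  "G2 t = exp (k2 / 2) * exp (- k2 * (norm t) ^ 2) + exp (- (1/8) * (norm t) ^ 2)"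

lemma G2_int: "integrable lborel G2"
  unfolding G2_def[abs_def]
  by (intro Bochner_Integration.integrable_add integrable_mult_right gauss_n k2_pos) auto

lemma dom2: "n > 0 \<Longrightarrow> psi_n n t \<le> G2 t"
proof -
  assume n: "n > 0"
  define s where "s = rn n *\<^sub>R t"
  have Gpos1: "0 \<le> exp (k2 / 2) * exp (- k2 * (norm t) ^ 2)" by simp
  have Gpos2: "0 \<le> exp (- (1/8) * (norm t) ^ 2)" by simp
  show ?thesis
  proof (cases "(norm s) ^ 2 \<le> 64")
    case True
    have Hs: "Hf s \<le> exp (- k2 * ((s$1) ^ 4 + (s$2) ^ 4))" by (rule Hf2_small[OF True])
    have "psi_n n t = Hf s ^ n" unfolding s_def by (rule psi_n_Hf)
    also have "\<dots> \<le> exp (- k2 * ((s$1) ^ 4 + (s$2) ^ 4)) ^ n"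
      using Hs Hf_pos[of s] by (intro power_mono) auto
    also have "\<dots> = exp (real n * (- k2 * ((s$1) ^ 4 + (s$2) ^ 4)))" by (rule exp_of_nat_mult[symmetric])
    also have "real n * (- k2 * ((s$1) ^ 4 + (s$2) ^ 4)) = - k2 * (real n * (rn n) ^ 4) * ((t$1) ^ 4 + (t$2) ^ 4)"
      unfolding s_def by (simp add: power_mult_distrib algebra_simps)
    also have "\<dots> = - k2 * ((t$1) ^ 4 + (t$2) ^ 4)" using rn_4[OF n] by simp
    also have "exp \<dots> \<le> exp (k2 / 2) * exp (- k2 * (norm t) ^ 2)"
    proof -
      have q: "(t$i) ^ 2 - 1/4 \<le> (t$i) ^ 4" for i
      proof -
        have "0 \<le> ((t$i) ^ 2 - 1/2) ^ 2" by simp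
        then show ?thesis by (simp add: power2_eq_square power4_eq_xxxx algebra_simps)
      qed
      have "(norm t) ^ 2 - 1/2 \<le> (t$1) ^ 4 + (t$2) ^ 4" unfolding norm2_2 using q[of 1] q[of 2] by linarith
      then have m: "k2 * (norm t) ^ 2 \<le> k2 * (1/2) + k2 * ((t$1) ^ 4 + (t$2) ^ 4)"
        using k2_pos by (subst distrib_left[symmetric]) (intro mult_left_mono, auto simp: algebra_simps)
      then have "- k2 * ((t$1) ^ 4 + (t$2) ^ 4) \<le> k2 / 2 + - k2 * (norm t) ^ 2" by linarith
      then show ?thesis by (simp flip: exp_add)
    qed
    finally show ?thesis unfolding G2_def using Gpos2 by linarith
  next
    case False
    then have big: "(norm (rn n *\<^sub>R t)) ^ 2 \<ge> 16 * (real CARD(2)) ^ 2" unfolding s_def by simp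
    have "psi_n n t \<le> exp (- ((norm t) ^ 2) / (4 * real CARD(2)))" by (rule psi_n_large[OF n big])
    also have "\<dots> = exp (- (1/8) * (norm t) ^ 2)" by simp
    finally show ?thesis unfolding G2_def using Gpos1 by linarith
  qed
qed

theorem srw2: "srw_conv (psi2 :: real ^ 2 \<Rightarrow> real)"
  by (rule assemble[OF psi2_Q G2_int dom2])



definition Pg :: "real^'n::finite \<Rightarrow> real" where
  "Pg t = (norm t) ^ 4 - (\<Sum>i\<in>UNIV. (t $ i) ^ 4)"

lemma Pg_alt: "Pg t = (\<Sum>l\<in>UNIV. (t $ l) ^ 2 * ((norm t) ^ 2 - (t $ l) ^ 2))"
proof -
  have "(norm t) ^ 4 = (norm t) ^ 2 * (\<Sum>l\<in>UNIV. (t $ l) ^ 2)"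
    by (simp add: norm_sq_sum[symmetric] flip: power_add)
  also have "\<dots> = (\<Sum>l\<in>UNIV. (t $ l) ^ 2 * (norm t) ^ 2)" by (simp add: sum_distrib_left mult.commute)
  finally have "(norm t) ^ 4 = (\<Sum>l\<in>UNIV. (t $ l) ^ 2 * (norm t) ^ 2)" .
  moreover have "(\<Sum>i\<in>UNIV. (t $ i) ^ 4) = (\<Sum>l\<in>UNIV. (t $ l) ^ 2 * (t $ l) ^ 2)"
    by (simp flip: power_add)
  ultimately show ?thesis unfolding Pg_def by (simp add: sum_subtractf right_diff_distrib)
qed

lemma Pg_term: "(t $ i) ^ 2 * ((norm t) ^ 2 - (t $ i) ^ 2) \<le> Pg t" and Pg_nn: "0 \<le> Pg t"
proof -
  have nn: "0 \<le> (t $ l) ^ 2 * ((norm t) ^ 2 - (t $ l) ^ 2)" for l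
    using comp_le_norm_sq[of t l] by simp
  show "(t $ i) ^ 2 * ((norm t) ^ 2 - (t $ i) ^ 2) \<le> Pg t"
    unfolding Pg_alt by (rule member_le_sum) (use nn in auto)
  show "0 \<le> Pg t" unfolding Pg_alt by (rule sum_nonneg) (use nn in auto)
qed

lemma Pg_scale: "Pg (c *\<^sub>R t) = c ^ 4 * Pg t"
proof -
  have "(norm (c *\<^sub>R t)) ^ 4 = c ^ 4 * (norm t) ^ 4"
    by (simp add: power_mult_distrib power_even_abs_numeral)
  then show ?thesis unfolding Pg_def by (simp add: power_mult_distrib sum_distrib_left right_diff_distrib)
qed

lemma Basis_cart: "(Basis :: (real^'n::finite) set) = range (\<lambda>i. axis i 1)"
  by (auto simp: Basis_vec_def)

lemma inj_axis1: "inj (\<lambda>i. axis i (1::real) :: real^'n::finite)"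
  by (auto intro: injI simp: axis_eq_axis)

lemma prod_Basis: "(\<Prod>b\<in>(Basis :: (real^'n::finite) set). g b) = (\<Prod>i\<in>UNIV. g (axis i 1))"
  unfolding Basis_cart by (simp add: prod.reindex[OF inj_axis1])

definition fam :: "real \<Rightarrow> 'n::finite \<Rightarrow> nat \<Rightarrow> real^'n \<Rightarrow> real \<Rightarrow> ennreal" where
  "fam k i j b y = (if b = axis i 1 then indicator {-(2^(j+1))..2^(j+1)} y else ennreal (exp (- (k * 4^j) * y ^ 2)))"

definition Dk :: "real \<Rightarrow> real^'n::finite \<Rightarrow> ennreal" where
  "Dk k t = (\<Prod>b\<in>Basis. indicator {-1..1::real} (t \<bullet> b)) + (\<Sum>i\<in>UNIV. \<Sum>j. \<Prod>b\<in>Basis. fam k i j b (t \<bullet> b))"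

lemma fam_meas: "fam k i j b \<in> borel_measurable borel"
  unfolding fam_def by (cases "b = axis i 1") simp_all

lemma fam_axis: "fam k i j (axis l 1) y = (if l = i then indicator {-(2^(j+1))..2^(j+1)} y else ennreal (exp (- (k * 4^j) * y ^ 2)))"
  unfolding fam_def by (simp add: axis_eq_axis)

lemma choose_j:
  fixes y :: real assumes "1 < y"
  shows "\<exists>j. 2 ^ j \<le> y \<and> y \<le> 2 ^ (j+1)"
proof -
  have "\<exists>n. y < (2::real) ^ n" by (rule real_arch_pow) simp
  then obtain n where n: "y < 2 ^ n" and min: "\<And>m. m < n \<Longrightarrow> \<not> y < 2 ^ m"
    unfolding exists_least_iff[of "\<lambda>n. y < (2::real) ^ n"] by blast
  have "n \<noteq> 0" using n assms by (cases n) auto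
  then obtain j where j: "n = Suc j" by (cases n) auto
  have "2 ^ j \<le> y" using min[of j] j by simp
  then show ?thesis using n j by (intro exI[of _ j]) simp
qed

lemma Dk_bound:
  fixes t :: "real^'n::finite" assumes k: "k > 0"
  shows "ennreal (exp (- k * Pg t)) \<le> Dk k t"
proof (cases "\<forall>l. \<bar>t $ l\<bar> \<le> 1")
  case True
  have c1: "(\<Prod>b\<in>Basis. indicator {-1..1::real} (t \<bullet> b) :: ennreal) = 1"
    unfolding prod_Basis using True by (intro prod.neutral) (auto simp: cart_eq_inner_axis[symmetric] indicator_def abs_le_iff)
  have "exp (- k * Pg t) \<le> 1" using k Pg_nn[of t] by simp
  then have "ennreal (exp (- k * Pg t)) \<le> 1" by simp
  also have "\<dots> \<le> Dk k t" unfolding Dk_def c1 by simp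
  finally show ?thesis .
next
  case False
  then obtain i where i: "1 < \<bar>t $ i\<bar>" by (auto simp: not_le)
  obtain j where j1: "2 ^ j \<le> \<bar>t $ i\<bar>" and j2: "\<bar>t $ i\<bar> \<le> 2 ^ (j+1)" using choose_j[OF i] by blast
  have F_eq: "(\<Prod>b\<in>Basis. fam k i j b (t \<bullet> b)) = ennreal (exp (- (k * 4^j) * ((norm t) ^ 2 - (t $ i) ^ 2)))"
  proof -
    have "(\<Prod>b\<in>Basis. fam k i j b (t \<bullet> b)) = (\<Prod>l\<in>UNIV. fam k i j (axis l 1) (t $ l))"
      unfolding prod_Basis by (simp add: cart_eq_inner_axis[symmetric])
    also have "\<dots> = fam k i j (axis i 1) (t $ i) * (\<Prod>l\<in>UNIV - {i}. fam k i j (axis l 1) (t $ l))"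
      by (subst prod.remove[of UNIV i]) auto
    also have "fam k i j (axis i 1) (t $ i) = 1"
      unfolding fam_axis using j2 by (simp add: indicator_def abs_le_iff)
    also have "(\<Prod>l\<in>UNIV - {i}. fam k i j (axis l 1) (t $ l)) = (\<Prod>l\<in>UNIV - {i}. ennreal (exp (- (k * 4^j) * (t $ l) ^ 2)))"
      by (intro prod.cong) (auto simp: fam_axis)
    also have "\<dots> = ennreal (\<Prod>l\<in>UNIV - {i}. exp (- (k * 4^j) * (t $ l) ^ 2))"
      by (rule prod_ennreal) simp
    also have "(\<Prod>l\<in>UNIV - {i}. exp (- (k * 4^j) * (t $ l) ^ 2)) = exp (\<Sum>l\<in>UNIV - {i}. - (k * 4^j) * (t $ l) ^ 2)"
      by (simp add: exp_sum)
    also have "(\<Sum>l\<in>UNIV - {i}. - (k * 4^j) * (t $ l) ^ 2) = - (k * 4^j) * ((norm t) ^ 2 - (t $ i) ^ 2)"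
    proof -
      have "(\<Sum>l\<in>UNIV. (t $ l) ^ 2) = (t $ i) ^ 2 + (\<Sum>l\<in>UNIV - {i}. (t $ l) ^ 2)"
        by (subst sum.remove[of UNIV i]) auto
      then show ?thesis unfolding norm_sq_sum by (simp add: sum_negf sum_distrib_left)
    qed
    finally show ?thesis by simp
  qed
  have le: "exp (- k * Pg t) \<le> exp (- (k * 4^j) * ((norm t) ^ 2 - (t $ i) ^ 2))"
  proof -
    have a: "(4::real) ^ j \<le> (t $ i) ^ 2"
    proof -
      have "((2::real) ^ j) ^ 2 \<le> \<bar>t $ i\<bar> ^ 2" using j1 by (intro power_mono) auto
      moreover have "(4::real) ^ j = (2 ^ j) ^ 2"
        by (simp add: power_mult_distrib[symmetric] power2_eq_square)
      ultimately show ?thesis by simp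
    qed
    have b: "0 \<le> (norm t) ^ 2 - (t $ i) ^ 2" using comp_le_norm_sq[of t i] by simp
    have "4 ^ j * ((norm t) ^ 2 - (t $ i) ^ 2) \<le> (t $ i) ^ 2 * ((norm t) ^ 2 - (t $ i) ^ 2)"
      using a b by (rule mult_right_mono)
    also have "\<dots> \<le> Pg t" by (rule Pg_term)
    finally have "k * (4 ^ j * ((norm t) ^ 2 - (t $ i) ^ 2)) \<le> k * Pg t" using k by simp
    then show ?thesis by (simp add: mult.assoc)
  qed
  have "ennreal (exp (- k * Pg t)) \<le> (\<Prod>b\<in>Basis. fam k i j b (t \<bullet> b))"
    unfolding F_eq using le by simp
  also have "\<dots> \<le> (\<Sum>j. \<Prod>b\<in>Basis. fam k i j b (t \<bullet> b))"
    using sum_le_suminf[OF summableI, of "{j}" "\<lambda>j. \<Prod>b\<in>Basis. fam k i j b (t \<bullet> b)"] by simp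
  also have "\<dots> \<le> (\<Sum>i\<in>UNIV. \<Sum>j. \<Prod>b\<in>Basis. fam k i j b (t \<bullet> b))"
    by (rule member_le_sum) auto
  also have "\<dots> \<le> Dk k t" unfolding Dk_def by simp
  finally show ?thesis .
qed



lemma int_cube: "(\<integral>\<^sup>+t. (\<Prod>b\<in>Basis. indicator {-1..1::real} ((t::real^'n::finite) \<bullet> b) :: ennreal) \<partial>lborel) < \<infinity>"
proof -
  have "(\<integral>\<^sup>+t. (\<Prod>b\<in>Basis. indicator {-1..1::real} ((t::real^'n) \<bullet> b) :: ennreal) \<partial>lborel)
      = (\<Prod>b\<in>(Basis::(real^'n) set). (\<integral>\<^sup>+x. indicator {-1..1::real} x \<partial>lborel))"
    by (rule nn_integral_lborel_prod) auto
  also have "\<dots> = (\<Prod>b\<in>(Basis::(real^'n) set). ennreal 2)" by simp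
  also have "\<dots> < \<infinity>" by (subst prod_ennreal) auto
  finally show ?thesis .
qed

lemma int_fam_other:
  assumes k: "k > 0" and l: "l \<noteq> i"
  shows "(\<integral>\<^sup>+y. fam k i j (axis l 1) y \<partial>lborel) = ennreal (sqrt (pi / (k * 4^j)))"
proof -
  have kp: "k * 4^j > 0" using k by simp
  show ?thesis unfolding fam_axis using l gauss1(2)[OF kp] by simp
qed

lemma int_fam_same:
  shows "(\<integral>\<^sup>+y. fam k i j (axis i 1) y \<partial>lborel) = ennreal (2 * 2^(j+1))"
proof -
  have "(\<integral>\<^sup>+y. fam k i j (axis i 1) y \<partial>lborel) = emeasure lborel {-(2^(j+1))..(2^(j+1)::real)}"
    unfolding fam_axis by simp
  also have "\<dots> = ennreal (2 * 2^(j+1))" by simp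
  finally show ?thesis .
qed

lemma int_F3:
  fixes i :: 3 assumes k: "k > 0"
  shows "(\<integral>\<^sup>+t. (\<Prod>b\<in>Basis. fam k i j b ((t::real^3) \<bullet> b)) \<partial>lborel) = ennreal (4 * pi / k * (1/2) ^ j)"
proof -
  have "(\<integral>\<^sup>+t. (\<Prod>b\<in>Basis. fam k i j b ((t::real^3) \<bullet> b)) \<partial>lborel)
      = (\<Prod>b\<in>(Basis::(real^3) set). (\<integral>\<^sup>+y. fam k i j b y \<partial>lborel))"
    by (rule nn_integral_lborel_prod) (auto simp: fam_meas)
  also have "\<dots> = (\<Prod>l\<in>UNIV. (\<integral>\<^sup>+y. fam k i j (axis l 1) y \<partial>lborel))" by (rule prod_Basis)
  also have "\<dots> = (\<integral>\<^sup>+y. fam k i j (axis i 1) y \<partial>lborel) * (\<Prod>l\<in>UNIV - {i}. (\<integral>\<^sup>+y. fam k i j (axis l 1) y \<partial>lborel))"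
    by (subst prod.remove[of UNIV i]) auto
  also have "(\<Prod>l\<in>UNIV - {i}. (\<integral>\<^sup>+y. fam k i j (axis l 1) y \<partial>lborel)) = (\<Prod>l\<in>UNIV - {i}. ennreal (sqrt (pi / (k * 4^j))))"
    by (intro prod.cong refl int_fam_other[OF k]) auto
  also have "\<dots> = ennreal (sqrt (pi / (k * 4^j))) ^ 2"
    by (simp add: card_Diff_singleton)
  also have "\<dots> = ennreal (pi / (k * 4^j))" using k by (subst ennreal_power) (auto simp: real_sqrt_pow2)
  also note int_fam_same
  also have "ennreal (2 * 2^(j+1)) * ennreal (pi / (k * 4^j)) = ennreal (2 * 2^(j+1) * (pi / (k * 4^j)))"
    by (rule ennreal_mult[symmetric]) (use k in auto)
  also have "2 * 2^(j+1) * (pi / (k * 4^j)) = 4 * pi / k * (1/2) ^ j"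
  proof -
    have "(4::real) ^ j = 2 ^ j * 2 ^ j" by (simp add: power_mult_distrib[symmetric])
    then show ?thesis using k by (simp add: field_simps power_one_over)
  qed
  finally show ?thesis .
qed

lemma Dk_meas: "Dk k \<in> borel_measurable (lborel :: (real^'n::finite) measure)"
  unfolding Dk_def[abs_def] using fam_meas by measurable

lemma int_Dk3:
  assumes k: "k > 0"
  shows "(\<integral>\<^sup>+t. Dk k (t::real^3) \<partial>lborel) < \<infinity>"
proof -
  have mF: "(\<lambda>t::real^3. \<Prod>b\<in>Basis. fam k i j b (t \<bullet> b)) \<in> borel_measurable lborel" for i j
    using fam_meas by measurable
  have mS: "(\<lambda>t::real^3. \<Sum>j. \<Prod>b\<in>Basis. fam k i j b (t \<bullet> b)) \<in> borel_measurable lborel" for i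
    using fam_meas by measurable
  have "(\<integral>\<^sup>+t. Dk k (t::real^3) \<partial>lborel) = (\<integral>\<^sup>+t. (\<Prod>b\<in>Basis. indicator {-1..1::real} ((t::real^3) \<bullet> b) :: ennreal) \<partial>lborel)
      + (\<integral>\<^sup>+t. (\<Sum>i\<in>UNIV. \<Sum>j. \<Prod>b\<in>Basis. fam k i j b ((t::real^3) \<bullet> b)) \<partial>lborel)"
    unfolding Dk_def by (rule nn_integral_add) (use mS in measurable)
  also have "(\<integral>\<^sup>+t. (\<Sum>i\<in>UNIV. \<Sum>j. \<Prod>b\<in>Basis. fam k i j b ((t::real^3) \<bullet> b)) \<partial>lborel)
      = (\<Sum>i\<in>UNIV. \<integral>\<^sup>+t. (\<Sum>j. \<Prod>b\<in>Basis. fam k i j b ((t::real^3) \<bullet> b)) \<partial>lborel)"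
    by (rule nn_integral_sum) (rule mS)
  also have "\<dots> = (\<Sum>i\<in>(UNIV::3 set). \<Sum>j. ennreal (4 * pi / k * (1/2) ^ j))"
    by (intro sum.cong refl) (simp add: nn_integral_suminf[OF mF] int_F3[OF k])
  finally have eq: "(\<integral>\<^sup>+t. Dk k (t::real^3) \<partial>lborel) = (\<integral>\<^sup>+t. (\<Prod>b\<in>Basis. indicator {-1..1::real} ((t::real^3) \<bullet> b) :: ennreal) \<partial>lborel)
      + (\<Sum>i\<in>(UNIV::3 set). \<Sum>j. ennreal (4 * pi / k * (1/2) ^ j))" .
  have fin: "(\<Sum>j. ennreal (4 * pi / k * (1/2) ^ j)) < \<infinity>"
  proof -
    have "summable (\<lambda>j. 4 * pi / k * (1/2::real) ^ j)" by (intro summable_mult summable_geometric) simp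
    then have "(\<Sum>j. ennreal (4 * pi / k * (1/2) ^ j)) \<noteq> top"
      using k by (intro ennreal_suminf_neq_top) auto
    then show ?thesis by (simp add: less_top)
  qed
  have "(\<Sum>i\<in>(UNIV::3 set). \<Sum>j. ennreal (4 * pi / k * (1/2) ^ j)) < \<infinity>"
    using fin by (simp add: ennreal_mult_less_top of_nat_less_top)
  then show ?thesis unfolding eq using int_cube by (simp add: ennreal_add_less_top)
qed

lemma Pg_cont: "continuous_on UNIV (Pg :: real^'n::finite \<Rightarrow> real)"
proof -
  have c1: "continuous_on UNIV (\<lambda>t::real^'n. (norm t) ^ 4)" by (intro continuous_intros)
  have c2: "continuous_on UNIV (\<lambda>t::real^'n. \<Sum>i\<in>UNIV. (t $ i) ^ 4)"
    by (intro continuous_on_sum continuous_on_power continuous_on_component continuous_on_id)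
  show ?thesis unfolding Pg_def[abs_def] by (rule continuous_on_diff[OF c1 c2])
qed

lemma integrable_Pg3:
  assumes k: "k > 0"
  shows "integrable lborel (\<lambda>t::real^3. exp (- k * Pg t))"
proof (rule integrableI_nonneg)
  have "continuous_on UNIV (\<lambda>t::real^3. exp (- k * Pg t))"
    by (intro continuous_intros continuous_on_compose2[OF Pg_cont]) auto
  then show "(\<lambda>t::real^3. exp (- k * Pg t)) \<in> borel_measurable lborel"
    by (simp add: borel_measurable_continuous_onI)
  show "AE x in lborel. 0 \<le> exp (- k * Pg (x::real^3))" by simp
  have "(\<integral>\<^sup>+t. ennreal (exp (- k * Pg (t::real^3))) \<partial>lborel) \<le> (\<integral>\<^sup>+t. Dk k (t::real^3) \<partial>lborel)"
    by (intro nn_integral_mono Dk_bound[OF k])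
  also have "\<dots> < \<infinity>" by (rule int_Dk3[OF k])
  finally show "(\<integral>\<^sup>+t. ennreal (exp (- k * Pg (t::real^3))) \<partial>lborel) < \<infinity>" .
qed



lemma card3: "CARD(3) = 3" by simp

lemma norm3: "(norm (t::real^3)) ^ 2 = (t$1) ^ 2 + (t$2) ^ 2 + (t$3) ^ 2"
  unfolding norm_sq_sum by (simp add: sum_3)

lemma Pg3: "Pg (t::real^3) = 2 * ((t$1)\<^sup>2 * (t$2)\<^sup>2 + (t$1)\<^sup>2 * (t$3)\<^sup>2 + (t$2)\<^sup>2 * (t$3)\<^sup>2)"
proof -
  define a where "a = t$1"
  define b where "b = t$2"
  define c where "c = t$3"
  have n4: "(norm t) ^ 4 = (a ^ 2 + b ^ 2 + c ^ 2) ^ 2"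
  proof -
    have "(norm t) ^ 4 = ((norm t) ^ 2) ^ 2" by (simp flip: power_mult)
    then show ?thesis unfolding norm3 a_def b_def c_def .
  qed
  have "Pg t = (a ^ 2 + b ^ 2 + c ^ 2) ^ 2 - (a ^ 4 + b ^ 4 + c ^ 4)"
    unfolding Pg_def n4 by (simp add: sum_3 a_def b_def c_def)
  also have "\<dots> = 2 * (a\<^sup>2 * b\<^sup>2 + a\<^sup>2 * c\<^sup>2 + b\<^sup>2 * c\<^sup>2)"
    by (simp add: field_simps power2_eq_square power4_eq_xxxx)
  finally show ?thesis unfolding a_def b_def c_def .
qed

lemma psi3_Q: "psi3 t = exp (Qf t)"
proof -
  define a where "a = t$1"
  define b where "b = t$2"
  define c where "c = t$3"
  have n4: "(norm t) ^ 4 = (a ^ 2 + b ^ 2 + c ^ 2) ^ 2"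
  proof -
    have "(norm t) ^ 4 = ((norm t) ^ 2) ^ 2" by (simp flip: power_mult)
    then show ?thesis unfolding norm3 a_def b_def c_def .
  qed
  have "Qf t = (a ^ 4 + b ^ 4 + c ^ 4) / 72 - (a ^ 2 + b ^ 2 + c ^ 2) ^ 2 / 72"
    unfolding Qf_def n4 card3 by (simp add: sum_3 a_def b_def c_def)
  also have "\<dots> = - (a\<^sup>2 * b\<^sup>2 + a\<^sup>2 * c\<^sup>2 + b\<^sup>2 * c\<^sup>2) / 36"
    by (simp add: field_simps power2_eq_square power4_eq_xxxx)
  finally show ?thesis unfolding psi3_def a_def b_def c_def by simp
qed

definition k3 :: real where "k3 = exp (-24) / 72"

lemma k3_pos: "k3 > 0" unfolding k3_def by simp

lemma lin3: fixes c1 c2 c3 x1 x2 x3 :: real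
  shows "c1 \<le> 1 + 3 * x1 \<Longrightarrow> c2 \<le> 1 + 3 * x2 \<Longrightarrow> c3 \<le> 1 + 3 * x3 \<Longrightarrow> (c1 + c2 + c3) / 3 \<le> 1 + x1 + x2 + x3"
  by (simp add: field_simps)

lemma Hf3_small:
  fixes s :: "real^3"
  assumes N: "(norm s) ^ 2 \<le> 144"
  shows "Hf s \<le> exp (- k3 * Pg s)"
proof -
  define a1 where "a1 = (s$1) ^ 2"
  define a2 where "a2 = (s$2) ^ 2"
  define a3 where "a3 = (s$3) ^ 2"
  define x1 where "x1 = exp (a1 / 6) - 1"
  define x2 where "x2 = exp (a2 / 6) - 1"
  define x3 where "x3 = exp (a3 / 6) - 1"
  define E where "E = exp ((norm s) ^ 2 / 6)"
  have a10: "a1 \<ge> 0" and a20: "a2 \<ge> 0" and a30: "a3 \<ge> 0" unfolding a1_def a2_def a3_def by simp_all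
  have x1a: "x1 \<ge> a1 / 6" unfolding x1_def using exp_ge_add_one_self[of "a1/6"] by linarith
  have x2a: "x2 \<ge> a2 / 6" unfolding x2_def using exp_ge_add_one_self[of "a2/6"] by linarith
  have x3a: "x3 \<ge> a3 / 6" unfolding x3_def using exp_ge_add_one_self[of "a3/6"] by linarith
  have x10: "x1 \<ge> 0" using x1a a10 by linarith
  have x20: "x2 \<ge> 0" using x2a a20 by linarith
  have x30: "x3 \<ge> 0" using x3a a30 by linarith
  have E_eq: "E = (1 + x1) * (1 + x2) * (1 + x3)"
    unfolding E_def x1_def x2_def x3_def a1_def a2_def a3_def norm3 by (simp add: add_divide_distrib exp_add)
  have E0: "E > 0" unfolding E_def by simp
  have E24: "E \<le> exp 24" unfolding E_def using N by simp
  have c1: "cosh (s$1) \<le> 1 + 3 * x1" using cosh_dom3[of "s$1"] unfolding x1_def a1_def by simp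
  have c2: "cosh (s$2) \<le> 1 + 3 * x2" using cosh_dom3[of "s$2"] unfolding x2_def a2_def by simp
  have c3: "cosh (s$3) \<le> 1 + 3 * x3" using cosh_dom3[of "s$3"] unfolding x3_def a3_def by simp
  have Meq: "Mf s = (cosh (s$1) + cosh (s$2) + cosh (s$3)) / 3" unfolding Mf_def card3 by (simp add: sum_3)
  have M: "Mf s \<le> 1 + x1 + x2 + x3" unfolding Meq by (rule lin3[OF c1 c2 c3])
  have Pga: "Pg s = 2 * (a1 * a2 + a1 * a3 + a2 * a3)" unfolding Pg3 a1_def a2_def a3_def by simp
  have Q: "(a1 * a2 + a1 * a3 + a2 * a3) / 36 \<le> x1 * x2 + x1 * x3 + x2 * x3"
  proof -
    have "(a1/6) * (a2/6) \<le> x1 * x2" using x1a x2a a10 a20 by (intro mult_mono) auto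
    moreover have "(a1/6) * (a3/6) \<le> x1 * x3" using x1a x3a a10 a30 by (intro mult_mono) auto
    moreover have "(a2/6) * (a3/6) \<le> x2 * x3" using x2a x3a a20 a30 by (intro mult_mono) auto
    ultimately show ?thesis by (simp add: field_simps)
  qed
  have x123: "0 \<le> x1 * x2 * x3" using x10 x20 x30 by simp
  have E_exp: "E = 1 + x1 + x2 + x3 + (x1 * x2 + x1 * x3 + x2 * x3) + x1 * x2 * x3"
    unfolding E_eq by (simp add: algebra_simps)
  have M2: "Mf s \<le> E - Pg s / 72"
  proof -
    have "Pg s / 72 = (a1 * a2 + a1 * a3 + a2 * a3) / 36" unfolding Pga by simp
    then show ?thesis using M Q x123 E_exp by linarith
  qed
  have Pg0: "0 \<le> Pg s" by (rule Pg_nn)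
  have H_eq: "Hf s = Mf s / E"
    unfolding Hf_def E_def card3 by (simp add: exp_minus field_simps)
  have "Hf s \<le> (E - Pg s / 72) / E" unfolding H_eq using M2 E0 by (simp add: divide_right_mono)
  also have "\<dots> = 1 - Pg s / (72 * E)" using E0 by (simp add: field_simps)
  also have "\<dots> \<le> 1 - k3 * Pg s"
  proof -
    have "Pg s / (72 * exp 24) \<le> Pg s / (72 * E)" using Pg0 E0 E24 by (intro divide_left_mono) auto
    moreover have "k3 * Pg s = Pg s / (72 * exp 24)" unfolding k3_def by (simp add: exp_minus field_simps)
    ultimately show ?thesis by linarith
  qed
  also have "\<dots> \<le> exp (- k3 * Pg s)" using exp_ge_add_one_self[of "- k3 * Pg s"] by simp
  finally show ?thesis .
qed

definition G3 :: "real^3 \<Rightarrow> real" where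
  "G3 t = exp (- k3 * Pg t) + exp (- (1/12) * (norm t) ^ 2)"

lemma G3_int: "integrable lborel G3"
  unfolding G3_def[abs_def]
  by (intro Bochner_Integration.integrable_add integrable_Pg3 gauss_n k3_pos) auto

lemma dom3: "n > 0 \<Longrightarrow> psi_n n t \<le> G3 t"
proof -
  assume n: "n > 0"
  define s where "s = rn n *\<^sub>R t"
  have Gpos1: "0 \<le> exp (- k3 * Pg t)" by simp
  have Gpos2: "0 \<le> exp (- (1/12) * (norm t) ^ 2)" by simp
  show ?thesis
  proof (cases "(norm s) ^ 2 \<le> 144")
    case True
    have Hs: "Hf s \<le> exp (- k3 * Pg s)" by (rule Hf3_small[OF True])
    have "psi_n n t = Hf s ^ n" unfolding s_def by (rule psi_n_Hf)
    also have "\<dots> \<le> exp (- k3 * Pg s) ^ n"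
      using Hs Hf_pos[of s] by (intro power_mono) auto
    also have "\<dots> = exp (real n * (- k3 * Pg s))" by (rule exp_of_nat_mult[symmetric])
    also have "real n * (- k3 * Pg s) = - k3 * (real n * (rn n) ^ 4) * Pg t"
      unfolding s_def Pg_scale by (simp add: algebra_simps)
    also have "\<dots> = - k3 * Pg t" using rn_4[OF n] by simp
    finally show ?thesis unfolding G3_def using Gpos2 by linarith
  next
    case False
    then have big: "(norm (rn n *\<^sub>R t)) ^ 2 \<ge> 16 * (real CARD(3)) ^ 2" unfolding s_def by simp
    have "psi_n n t \<le> exp (- ((norm t) ^ 2) / (4 * real CARD(3)))" by (rule psi_n_large[OF n big])
    also have "\<dots> = exp (- (1/12) * (norm t) ^ 2)" by simp
    finally show ?thesis unfolding G3_def using Gpos1 by linarith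
  qed
qed

theorem srw3: "srw_conv (psi3 :: real ^ 3 \<Rightarrow> real)"
  by (rule assemble[OF psi3_Q G3_int dom3])


theorem mainTheorem7:
  shows "srw_conv (psi2 :: real ^ 2 \<Rightarrow> real) \<and> srw_conv (psi3 :: real ^ 3 \<Rightarrow> real)"
  using srw2 srw3 by blast

end
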